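(* Let $k$ be a positive integer and let $(\lambda^n)_{n\ge1}$ be a sequence of partitions with $\lambda^n\vdash n$ and $\lambda^n_1\le k$, such that for each $1\le i\le k$ the limit $a_i=\lim_{n\to\infty}(\lambda^n)'_i/n$ exists, where $(\lambda^n)'$ is the conjugate partition (so $(\lambda^n)'_i$ is the length of the $i$-th column, $0$ if absent). Then \[\lim_{n\to\infty}\big(s_{\lambda^n}(1^n)\,f^{\lambda^n}\big)^{1/n}=\prod_{i=1}^k\frac{1}{(1-a_i)^{1-a_i}\,a_i^{2a_i}},\] with the convention $0^0=1$.
   Context: For a partition $\lambda$, $f^\lambda$ is the number of standard Young tableaux of shape $\lambda$, and $s_\lambda(1^t)$ is the number of semistandard Young tableaux of shape $\lambda$ with entries in $\{1,\dots,t\}$. *)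

theory Defs
  imports Complex_Main
begin

definition is_partition :: "nat \<Rightarrow> nat list \<Rightarrow> bool" where
  "is_partition n lam \<longleftrightarrow> sorted_wrt (\<ge>) lam \<and> (\<forall>x\<in>set lam. 0 < x) \<and> sum_list lam = n"

text \<open>Young diagram, 0-indexed cells (row, column).\<close>
definition diagram :: "nat list \<Rightarrow> (nat \<times> nat) set" where
  "diagram lam = {(i, j). i < length lam \<and> j < lam ! i}"

text \<open>Conjugate partition, 1-indexed: length of the i-th column (0 if absent).\<close>
definition conj_part :: "nat list \<Rightarrow> nat \<Rightarrow> nat" where
  "conj_part lam i = length (filter (\<lambda>x. i \<le> x) lam)"

text \<open>Semistandard Young tableaux of shape lam with entries in {1..t}
  (functions extended by 0 outside the diagram).\<close>
definition ssyt :: "nat list \<Rightarrow> nat \<Rightarrow> (nat \<times> nat \<Rightarrow> nat) set" where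
  "ssyt lam t = {T. (\<forall>c. c \<notin> diagram lam \<longrightarrow> T c = 0)
     \<and> (\<forall>c\<in>diagram lam. T c \<in> {1..t})
     \<and> (\<forall>i j. (i, Suc j) \<in> diagram lam \<longrightarrow> T (i, j) \<le> T (i, Suc j))
     \<and> (\<forall>i j. (Suc i, j) \<in> diagram lam \<longrightarrow> T (i, j) < T (Suc i, j))}"

text \<open>s_lam(1^t): number of SSYT of shape lam with entries in {1..t}.\<close>
definition schur_ones :: "nat list \<Rightarrow> nat \<Rightarrow> nat" where
  "schur_ones lam t = card (ssyt lam t)"

definition syt :: "nat list \<Rightarrow> (nat \<times> nat \<Rightarrow> nat) set" where
  "syt lam = {T. (\<forall>c. c \<notin> diagram lam \<longrightarrow> T c = 0)
     \<and> bij_betw T (diagram lam) {1..sum_list lam}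
     \<and> (\<forall>i j. (i, Suc j) \<in> diagram lam \<longrightarrow> T (i, j) < T (i, Suc j))
     \<and> (\<forall>i j. (Suc i, j) \<in> diagram lam \<longrightarrow> T (i, j) < T (Suc i, j))}"

definition num_syt :: "nat list \<Rightarrow> nat" where
  "num_syt lam = card (syt lam)"

definition pow0 :: "real \<Rightarrow> real \<Rightarrow> real" where
  "pow0 x y = (if x = 0 then (if y = 0 then 1 else 0) else x powr y)"

end

theory Submission
  imports Defs "Jordan_Normal_Form.Determinant" "HOL-Library.FuncSet" "HOL-Real_Asymp.Real_Asymp"
begin


definition ff :: "real \<Rightarrow> nat \<Rightarrow> real" where "ff x q = (\<Prod>m<q. x - real m)"

lemma ff_shift: "x * ff (x-1) q = ff x (Suc q)"
  unfolding ff_def prod.lessThan_Suc_shift by (simp add: algebra_simps)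

lemma ff_Suc: "ff x (Suc q) = ff x q * (x - real q)"
  unfolding ff_def by simp

lemma ff_E: "x * ff (x - 1) q + (T - x) * ff x q = (T - real q) * ff x q"
  unfolding ff_shift ff_Suc by (simp add: algebra_simps)

definition Dm :: "nat \<Rightarrow> (nat \<Rightarrow> real) \<Rightarrow> real" where
  "Dm k x = det (mat k k (\<lambda>(i,j). ff (x i) (k - 1 - j)))"

lemma Dm_perm: "Dm k x = (\<Sum>p\<in>{p. p permutes {0..<k}}. signof p * (\<Prod>i=0..<k. ff (x i) (k - 1 - p i)))"
proof -
  have "Dm k x = (\<Sum>p\<in>{p. p permutes {0..<k}}. signof p * (\<Prod>i=0..<k. mat k k (\<lambda>(i,j). ff (x i) (k - 1 - j)) $$ (i, p i)))"
    unfolding Dm_def by (rule det_def') simp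
  also have "\<dots> = (\<Sum>p\<in>{p. p permutes {0..<k}}. signof p * (\<Prod>i=0..<k. ff (x i) (k - 1 - p i)))"
  proof (rule sum.cong[OF refl])
    fix p assume "p \<in> {p. p permutes {0..<k}}"
    hence p: "p permutes {0..<k}" by simp
    have "\<And>i. i \<in> {0..<k} \<Longrightarrow> p i < k" using p by (simp add: permutes_in_image)
    thus "signof p * (\<Prod>i=0..<k. mat k k (\<lambda>(i,j). ff (x i) (k - 1 - j)) $$ (i, p i)) =
          signof p * (\<Prod>i=0..<k. ff (x i) (k - 1 - p i))"
      by (intro arg_cong[where f="\<lambda>z. signof p * z"] prod.cong) auto
  qed
  finally show ?thesis .
qed

lemma prod_perm_shift:
  assumes p: "p permutes {0..<k}"
  shows "(\<Prod>i=0..<k. T - real (k - 1 - p i)) = (\<Prod>m<k. T - real m)"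
proof -
  have bij: "bij_betw (\<lambda>i. k - 1 - p i) {0..<k} {..<k}"
  proof -
    have b1: "bij_betw p {0..<k} {0..<k}" using p by (rule permutes_imp_bij)
    have b2: "bij_betw (\<lambda>j. k - 1 - j) {0..<k} {..<k}"
      by (rule bij_betw_byWitness[where f'="\<lambda>j. k - 1 - j"]) auto
    show ?thesis using bij_betw_trans[OF b1 b2] by (simp add: comp_def)
  qed
  show ?thesis using prod.reindex_bij_betw[OF bij, of "\<lambda>m. T - real m"] by simp
qed

lemma Dm_identity:
  "(\<Sum>S\<in>Pow {0..<k}. (\<Prod>i\<in>S. x i) * (\<Prod>i\<in>{0..<k}-S. T - x i) *
      Dm k (\<lambda>i. x i - (if i \<in> S then 1 else 0))) = (\<Prod>m<k. T - real m) * Dm k x"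
proof -
  let ?P = "{p. p permutes {0..<k}}"
  let ?A = "{0..<k}"
  have "(\<Sum>S\<in>Pow ?A. (\<Prod>i\<in>S. x i) * (\<Prod>i\<in>?A-S. T - x i) *
      Dm k (\<lambda>i. x i - (if i \<in> S then 1 else 0))) =
    (\<Sum>S\<in>Pow ?A. \<Sum>p\<in>?P. signof p * ((\<Prod>i\<in>S. x i) * (\<Prod>i\<in>?A-S. T - x i) *
      (\<Prod>i\<in>?A. ff (x i - (if i \<in> S then 1 else 0)) (k - 1 - p i))))"
    unfolding Dm_perm sum_distrib_left by (simp add: algebra_simps)
  also have "\<dots> = (\<Sum>p\<in>?P. signof p * (\<Sum>S\<in>Pow ?A. (\<Prod>i\<in>S. x i * ff (x i - 1) (k - 1 - p i)) *
      (\<Prod>i\<in>?A-S. (T - x i) * ff (x i) (k - 1 - p i))))"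
    unfolding sum_distrib_left
  proof (subst sum.swap, intro sum.cong refl)
    fix p S assume S: "S \<in> Pow ?A"
    have fin: "finite S" "finite (?A - S)" using S finite_subset by auto
    have split: "(\<Prod>i\<in>?A. ff (x i - (if i \<in> S then 1 else 0)) (k - 1 - p i)) =
       (\<Prod>i\<in>S. ff (x i - 1) (k - 1 - p i)) * (\<Prod>i\<in>?A-S. ff (x i) (k - 1 - p i))"
    proof -
      have "?A = S \<union> (?A - S)" using S by auto
      hence "(\<Prod>i\<in>?A. ff (x i - (if i \<in> S then 1 else 0)) (k - 1 - p i)) =
         (\<Prod>i\<in>S \<union> (?A - S). ff (x i - (if i \<in> S then 1 else 0)) (k - 1 - p i))" by simp
      also have "\<dots> = (\<Prod>i\<in>S. ff (x i - (if i \<in> S then 1 else 0)) (k - 1 - p i)) *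
          (\<Prod>i\<in>?A - S. ff (x i - (if i \<in> S then 1 else 0)) (k - 1 - p i))"
        by (rule prod.union_disjoint) (use fin in auto)
      also have "\<dots> = (\<Prod>i\<in>S. ff (x i - 1) (k - 1 - p i)) * (\<Prod>i\<in>?A-S. ff (x i) (k - 1 - p i))"
        by (intro arg_cong2[where f="(*)"] prod.cong) auto
      finally show ?thesis .
    qed
    show "signof p * ((\<Prod>i\<in>S. x i) * (\<Prod>i\<in>?A-S. T - x i) *
      (\<Prod>i\<in>?A. ff (x i - (if i \<in> S then 1 else 0)) (k - 1 - p i))) =
      signof p * ((\<Prod>i\<in>S. x i * ff (x i - 1) (k - 1 - p i)) *
      (\<Prod>i\<in>?A-S. (T - x i) * ff (x i) (k - 1 - p i)))"
      unfolding split prod.distrib by (simp add: algebra_simps)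
  qed
  also have "\<dots> = (\<Sum>p\<in>?P. signof p * (\<Prod>i\<in>?A. x i * ff (x i - 1) (k - 1 - p i) + (T - x i) * ff (x i) (k - 1 - p i)))"
    by (subst prod_add) auto
  also have "\<dots> = (\<Sum>p\<in>?P. signof p * ((\<Prod>i\<in>?A. T - real (k - 1 - p i)) * (\<Prod>i\<in>?A. ff (x i) (k - 1 - p i))))"
    unfolding ff_E prod.distrib by simp
  also have "\<dots> = (\<Sum>p\<in>?P. (\<Prod>m<k. T - real m) * (signof p * (\<Prod>i\<in>?A. ff (x i) (k - 1 - p i))))"
  proof (intro sum.cong refl)
    fix p assume "p \<in> ?P"
    hence e: "(\<Prod>i\<in>?A. T - real (k - 1 - p i)) = (\<Prod>m<k. T - real m)"
      by (intro prod_perm_shift) simp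
    show "signof p * ((\<Prod>i\<in>?A. T - real (k - 1 - p i)) * (\<Prod>i\<in>?A. ff (x i) (k - 1 - p i))) =
      (\<Prod>m<k. T - real m) * (signof p * (\<Prod>i\<in>?A. ff (x i) (k - 1 - p i)))"
      by (subst e) (simp only: mult.left_commute)
  qed
  also have "\<dots> = (\<Prod>m<k. T - real m) * Dm k x"
    unfolding Dm_perm sum_distrib_left atLeastLessThan_def by simp
  finally show ?thesis .
qed




lemma Dm_eq0:
  assumes "i < k" "j < k" "i \<noteq> j" "y i = y j"
  shows "Dm k y = 0"
  unfolding Dm_def
  by (rule det_identical_rows[of _ k i j]) (use assms in \<open>auto simp: row_def\<close>)

lemma prod_list_map_upt: "prod_list (map f [0..<n]) = (\<Prod>i<n. f i)"
  by (induct n) auto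

lemma ff_nat_self: "ff (real n) n = fact n"
proof (induct n)
  case 0 then show ?case by (simp add: ff_def)
next
  case (Suc n)
  have "ff (real (Suc n)) (Suc n) = real (Suc n) * ff (real (Suc n) - 1) n" by (rule ff_shift[symmetric])
  also have "\<dots> = real (Suc n) * fact n" using Suc by simp
  finally show ?case by (simp add: fact_Suc)
qed

lemma ff_nat_zero: "n < q \<Longrightarrow> ff (real n) q = 0"
  unfolding ff_def by (rule prod_zero) (auto intro!: bexI[where x=n])

lemma Dm_delta: "Dm k (\<lambda>i. real (k - 1 - i)) = (\<Prod>i<k. fact (k - 1 - i))"
proof -
  let ?A = "mat k k (\<lambda>(i,j). ff (real (k - 1 - i)) (k - 1 - j))"
  have ut: "upper_triangular ?A"
    unfolding upper_triangular_def
  proof (intro allI impI)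
    fix i j assume ij: "i < dim_row ?A" "j < i"
    hence "ff (real (k-1-i)) (k-1-j) = 0" by (intro ff_nat_zero) auto
    moreover have "?A $$ (i,j) = (\<lambda>(i,j). ff (real (k - 1 - i)) (k - 1 - j)) (i,j)"
      by (rule index_mat) (use ij in auto)
    ultimately show "?A $$ (i,j) = 0" by simp
  qed
  have "Dm k (\<lambda>i. real (k - 1 - i)) = prod_list (diag_mat ?A)"
    unfolding Dm_def by (rule det_upper_triangular[OF ut, of k]) simp
  also have "\<dots> = (\<Prod>i<k. ff (real (k - 1 - i)) (k - 1 - i))"
    unfolding diag_mat_def by (simp add: prod_list_map_upt)
  also have "\<dots> = (\<Prod>i<k. fact (k - 1 - i))" by (simp only: ff_nat_self)
  finally show ?thesis .
qed

lemma ff_Ints: "x \<in> \<int> \<Longrightarrow> ff x q \<in> \<int>"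
  unfolding ff_def by (intro Ints_prod) auto

lemma Dm_Ints: "(\<And>i. i < k \<Longrightarrow> y i \<in> \<int>) \<Longrightarrow> Dm k y \<in> \<int>"
  unfolding Dm_perm by (intro Ints_sum Ints_mult Ints_prod ff_Ints) auto

definition validc :: "nat \<Rightarrow> (nat \<Rightarrow> nat) \<Rightarrow> bool" where
  "validc k c \<longleftrightarrow> (\<forall>j. Suc j < k \<longrightarrow> c (Suc j) \<le> c j)"
definition lr :: "nat \<Rightarrow> (nat \<Rightarrow> nat) \<Rightarrow> nat \<Rightarrow> real" where
  "lr k c j = real (c j + (k - 1 - j))"
definition Af :: "nat \<Rightarrow> (nat \<Rightarrow> nat) \<Rightarrow> nat \<Rightarrow> real" where
  "Af k c t = (\<Prod>j<k. fact (t + j) / (fact (c j + (k - 1 - j)) * fact (t + j - c j)))"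
definition Gv :: "nat \<Rightarrow> (nat \<Rightarrow> nat) \<Rightarrow> nat \<Rightarrow> real" where
  "Gv k c t = (if validc k c \<and> (\<forall>j<k. c j \<le> t) then Dm k (lr k c) * Af k c t else 0)"
definition dec :: "(nat \<Rightarrow> nat) \<Rightarrow> nat set \<Rightarrow> nat \<Rightarrow> nat" where
  "dec c S j = c j - (if j \<in> S then 1 else 0)"
definition VS :: "nat \<Rightarrow> (nat \<Rightarrow> nat) \<Rightarrow> nat set set" where
  "VS k c = {S. S \<subseteq> {0..<k} \<and> (\<forall>j\<in>S. 0 < c j)}"

lemma validc_le0: "validc k c \<Longrightarrow> j < k \<Longrightarrow> c j \<le> c 0"
  by (induct j) (auto simp: validc_def intro: order_trans)

lemma validc_mono: "validc k c \<Longrightarrow> i \<le> j \<Longrightarrow> j < k \<Longrightarrow> c j \<le> c i"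
proof (induct j)
  case 0 thus ?case by simp
next
  case (Suc j)
  show ?case
  proof (cases "i = Suc j")
    case False
    hence "c j \<le> c i" using Suc by simp
    moreover have "c (Suc j) \<le> c j" using Suc.prems unfolding validc_def by simp
    ultimately show ?thesis by simp
  qed simp
qed

lemma Af_pos: "Af k c t > 0"
  unfolding Af_def by (intro prod_pos divide_pos_pos mult_pos_pos) auto

lemma prod_tk: "(\<Prod>m<k. real t + real k - 1 - real m) = (\<Prod>j<k. real (t + j))"
proof -
  have bij: "bij_betw (\<lambda>j. k - 1 - j) {..<k} {..<k}"
    by (rule bij_betw_byWitness[where f'="\<lambda>j. k - 1 - j"]) auto
  have "(\<Prod>m<k. real t + real k - 1 - real m) = (\<Prod>j<k. real t + real k - 1 - real (k - 1 - j))"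
    using prod.reindex_bij_betw[OF bij, of "\<lambda>m. real t + real k - 1 - real m"] by simp
  also have "\<dots> = (\<Prod>j<k. real (t + j))"
    by (intro prod.cong refl) (auto simp: of_nat_diff)
  finally show ?thesis .
qed




lemma frac_aux: "(\<alpha>::real) \<noteq> 0 \<Longrightarrow> \<beta> \<noteq> 0 \<Longrightarrow> \<beta> * (\<alpha> * A / (\<beta> * B * F)) / \<alpha> = A / (B * F)"
  by (cases "B * F = 0") (auto simp: field_simps)

lemma step_inS:
  assumes "1 \<le> cj" "cj \<le> t" "1 \<le> t" "j < k"
  shows "real (cj + (k - 1 - j)) * (fact (t + j) / (fact (cj + (k - 1 - j)) * fact (t + j - cj))) / real (t + j)
    = fact (t - 1 + j) / (fact (cj - 1 + (k - 1 - j)) * fact (t - 1 + j - (cj - 1)))"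
proof -
  obtain a where a: "t + j = Suc a" using assms by (cases "t + j") auto
  obtain b where b: "cj + (k - 1 - j) = Suc b" using assms by (cases "cj + (k - 1 - j)") auto
  have e1: "t - 1 + j = a" using a assms by simp
  have e2: "cj - 1 + (k - 1 - j) = b" using b assms by simp
  have e3: "t - 1 + j - (cj - 1) = t + j - cj" using assms by simp
  have "real (cj + (k - 1 - j)) * (fact (t + j) / (fact (cj + (k - 1 - j)) * fact (t + j - cj))) / real (t + j)
     = real (Suc b) * (real (Suc a) * fact a / (real (Suc b) * fact b * fact (t + j - cj))) / real (Suc a)"
    unfolding a b by (simp add: mult.assoc)
  also have "\<dots> = fact a / (fact b * fact (t + j - cj))" by (rule frac_aux) auto
  also have "fact a / (fact b * fact (t + j - cj)) = fact (t - 1 + j) / (fact (cj - 1 + (k - 1 - j)) * fact (t - 1 + j - (cj - 1)))"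
    by (simp only: e3) (simp only: e1 e2)
  finally show ?thesis .
qed

lemma step_notS:
  assumes "cj \<le> t - 1" "1 \<le> t" "j < k"
  shows "(real t + real k - 1 - real (cj + (k - 1 - j))) * (fact (t + j) / (fact (cj + (k - 1 - j)) * fact (t + j - cj))) / real (t + j)
    = fact (t - 1 + j) / (fact (cj + (k - 1 - j)) * fact (t - 1 + j - cj))"
proof -
  obtain a where a: "t + j = Suc a" using assms by (cases "t + j") auto
  obtain m where m: "t + j - cj = Suc m" using assms by (cases "t + j - cj") auto
  have e0: "real t + real k - 1 - real (cj + (k - 1 - j)) = real (Suc m)"
    using m assms by (simp add: of_nat_diff)
  have e1: "t - 1 + j = a" using a assms by simp
  have e2: "t - 1 + j - cj = m" using m assms by simp
  have "(real t + real k - 1 - real (cj + (k - 1 - j))) * (fact (t + j) / (fact (cj + (k - 1 - j)) * fact (t + j - cj))) / real (t + j)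
     = real (Suc m) * (real (Suc a) * fact a / (real (Suc m) * fact (cj + (k - 1 - j)) * fact m)) / real (Suc a)"
    unfolding e0 m unfolding a by (simp add: ac_simps)
  also have "\<dots> = fact a / (fact (cj + (k - 1 - j)) * fact m)" by (rule frac_aux) auto
  also have "fact a / (fact (cj + (k - 1 - j)) * fact m) = (fact (t - 1 + j) / (fact (cj + (k - 1 - j)) * fact (t - 1 + j - cj)) :: real)"
    unfolding e2 unfolding e1 by (rule refl)
  finally show ?thesis .
qed

lemma prod_mult_div: "(\<Prod>j\<in>A. f j) * (\<Prod>j\<in>A. g j) / (\<Prod>j\<in>A. h j) = (\<Prod>j\<in>A. (f j::real) * g j / h j)"
  by (simp add: prod.distrib prod_dividef)

lemma lr_dec: assumes "S \<in> VS k c" shows "lr k (dec c S) = (\<lambda>i. lr k c i - (if i \<in> S then 1 else 0))"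
  by (rule ext) (use assms in \<open>auto simp: VS_def lr_def dec_def of_nat_diff Suc_le_eq\<close>)

lemma Gv_rec:
  assumes v: "validc k c" and le: "\<forall>j<k. c j \<le> t" and t: "0 < t"
  shows "Gv k c t = (\<Sum>S\<in>VS k c. Gv k (dec c S) (t - 1))"
proof -
  let ?x = "lr k c"
  let ?T = "real t + real k - 1"
  let ?A = "{..<k}"
  let ?P = "\<Prod>j<k. real (t + j)"
  let ?w = "\<lambda>S. (\<Prod>i\<in>S. ?x i) * (\<Prod>i\<in>?A-S. ?T - ?x i)"
  let ?y = "\<lambda>S i. ?x i - (if i \<in> S then 1 else 0)"
  define tm where "tm S = ?w S * Dm k (?y S) * Af k c t / ?P" for S
  have Ppos: "?P > 0" using t by (intro prod_pos) auto
  have id: "(\<Sum>S\<in>Pow ?A. ?w S * Dm k (?y S)) = ?P * Dm k ?x"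
    using Dm_identity[where k=k and x="?x" and T="?T"] prod_tk[where k=k and t=t] by (simp add: atLeast0LessThan)
  have "Gv k c t = Dm k ?x * Af k c t" unfolding Gv_def using v le by simp
  also have "\<dots> = (\<Sum>S\<in>Pow ?A. tm S)"
  proof -
    have "(\<Sum>S\<in>Pow ?A. tm S) = (\<Sum>S\<in>Pow ?A. ?w S * Dm k (?y S)) * Af k c t / ?P"
      unfolding tm_def by (simp add: sum_distrib_right sum_divide_distrib)
    also have "\<dots> = Dm k ?x * Af k c t"
    proof -
      have "?P \<noteq> 0" using Ppos by linarith
      thus ?thesis unfolding id unfolding mult.assoc by (rule nonzero_mult_div_cancel_left)
    qed
    finally show ?thesis by simp
  qed
  also have "\<dots> = (\<Sum>S\<in>VS k c. tm S) + (\<Sum>S\<in>Pow ?A - VS k c. tm S)"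
  proof -
    have "VS k c \<subseteq> Pow ?A" unfolding VS_def by auto
    thus ?thesis by (metis add.commute finite_Pow_iff finite_lessThan sum.subset_diff)
  qed
  also have "(\<Sum>S\<in>Pow ?A - VS k c. tm S) = 0"
  proof (intro sum.neutral ballI)
    fix S assume S: "S \<in> Pow ?A - VS k c"
    hence SA: "S \<subseteq> ?A" and ex: "\<exists>j\<in>S. c j = 0" unfolding VS_def by auto
    let ?Z = "{j\<in>S. c j = 0}"
    have "?Z \<subseteq> {..<k}" using SA by blast
    hence finZ: "finite ?Z" using finite_subset by blast
    have neZ: "?Z \<noteq> {}" using ex by auto
    define J where "J = Max ?Z"
    have JZ: "J \<in> ?Z" unfolding J_def using Max_in[OF finZ neZ] .
    have Jmax: "\<And>j. j \<in> ?Z \<Longrightarrow> j \<le> J" unfolding J_def using Max_ge[OF finZ] by auto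
    have Jk: "J < k" using JZ SA by auto
    show "tm S = 0"
    proof (cases "Suc J < k")
      case False
      hence "J = k - 1" using Jk by simp
      hence "?x J = 0" using JZ unfolding lr_def by simp
      moreover have "finite S" by (rule finite_subset[OF SA]) simp
      ultimately have "(\<Prod>i\<in>S. ?x i) = 0" using JZ by (intro prod_zero) auto
      thus ?thesis unfolding tm_def by simp
    next
      case True
      have "c (Suc J) \<le> c J" using v True unfolding validc_def by simp
      hence c1: "c (Suc J) = 0" using JZ by simp
      have nS: "Suc J \<notin> S" using Jmax[of "Suc J"] c1 by auto
      have "?y S J = ?y S (Suc J)" using JZ nS c1 True unfolding lr_def by (auto simp: of_nat_diff)
      hence "Dm k (?y S) = 0" using True by (intro Dm_eq0[of J k "Suc J"]) auto
      thus ?thesis unfolding tm_def by simp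
    qed
  qed
  also have "(\<Sum>S\<in>VS k c. tm S) = (\<Sum>S\<in>VS k c. Gv k (dec c S) (t - 1))"
  proof (intro sum.cong refl)
    fix S assume S: "S \<in> VS k c"
    hence SA: "S \<subseteq> ?A" and pos: "\<forall>j\<in>S. 0 < c j" unfolding VS_def by auto
    let ?c' = "dec c S"
    have lrc': "lr k ?c' = ?y S" using lr_dec[OF S] .
    show "tm S = Gv k ?c' (t - 1)"
    proof (cases "validc k ?c'")
      case False
      then obtain j where j: "Suc j < k" "?c' (Suc j) > ?c' j" unfolding validc_def by (auto simp: not_le)
      have cj: "c (Suc j) \<le> c j" using v j(1) unfolding validc_def by simp
      have jS: "j \<in> S" and nS: "Suc j \<notin> S" and eq: "c (Suc j) = c j"
        using j cj unfolding dec_def by (auto split: if_splits)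
      have "?y S j = ?y S (Suc j)" using jS nS eq j(1) pos unfolding lr_def by (auto simp: of_nat_diff)
      hence "Dm k (?y S) = 0" using j(1) by (intro Dm_eq0[of j k "Suc j"]) auto
      thus ?thesis unfolding tm_def Gv_def using False by simp
    next
      case vc': True
      show ?thesis
      proof (cases "\<forall>j<k. ?c' j \<le> t - 1")
        case False
        then obtain j where j: "j < k" "?c' j > t - 1" by (auto simp: not_le)
        have "?c' j \<le> ?c' 0" using validc_le0[OF vc' j(1)] .
        moreover have "?c' 0 \<le> c 0" unfolding dec_def by simp
        moreover have "c 0 \<le> t" using le j(1) by simp
        ultimately have c0: "c 0 = t" and n0: "0 \<notin> S" using j(2) t unfolding dec_def
          by (auto split: if_splits)
        have "?T - ?x 0 = 0" using c0 j(1) unfolding lr_def by (simp add: of_nat_diff)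
        hence pz: "(\<Prod>i\<in>?A-S. ?T - ?x i) = 0" using n0 j(1) by (intro prod_zero) (auto intro!: bexI[where x=0])
        have "tm S = 0" unfolding tm_def by (simp only: pz mult_zero_right mult_zero_left div_0)
        moreover have "Gv k ?c' (t - 1) = 0" unfolding Gv_def using False by auto
        ultimately show ?thesis by simp
      next
        case le': True
        have Gc': "Gv k ?c' (t - 1) = Dm k (?y S) * Af k ?c' (t - 1)"
          unfolding Gv_def lrc' using vc' le' by simp
        have "?w S * Af k c t / ?P = (\<Prod>j\<in>?A. (if j \<in> S then ?x j else ?T - ?x j) *
             (fact (t + j) / (fact (c j + (k - 1 - j)) * fact (t + j - c j))) / real (t + j))"
        proof -
          have "?w S = (\<Prod>j\<in>?A. (if j \<in> S then ?x j else ?T - ?x j))"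
          proof -
            have "(\<Prod>j\<in>?A. (if j \<in> S then ?x j else ?T - ?x j)) =
                (\<Prod>j\<in>?A \<inter> {j. j \<in> S}. ?x j) * (\<Prod>j\<in>?A \<inter> - {j. j \<in> S}. ?T - ?x j)"
              by (rule prod.If_cases) simp
            also have "?A \<inter> {j. j \<in> S} = S" using SA by auto
            also have "?A \<inter> - {j. j \<in> S} = ?A - S" by auto
            finally show ?thesis by simp
          qed
          thus ?thesis unfolding Af_def by (simp only: prod_mult_div)
        qed
        also have "\<dots> = (\<Prod>j\<in>?A. fact (t - 1 + j) / (fact (?c' j + (k - 1 - j)) * fact (t - 1 + j - ?c' j)))"
        proof (intro prod.cong refl)
          fix j assume j: "j \<in> ?A"
          show "(if j \<in> S then ?x j else ?T - ?x j) *
             (fact (t + j) / (fact (c j + (k - 1 - j)) * fact (t + j - c j))) / real (t + j) =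
             fact (t - 1 + j) / (fact (?c' j + (k - 1 - j)) * fact (t - 1 + j - ?c' j))"
          proof (cases "j \<in> S")
            case True
            have e: "?c' j = c j - 1" unfolding dec_def using True by simp
            have e2: "(if j \<in> S then ?x j else ?T - ?x j) = real (c j + (k - 1 - j))" using True unfolding lr_def by simp
            show ?thesis unfolding e e2 by (rule step_inS) (use pos True le j t in auto)
          next
            case False
            have e: "?c' j = c j" unfolding dec_def using False by simp
            have cj: "c j \<le> t - 1" using le' j False unfolding dec_def by auto
            have e2: "(if j \<in> S then ?x j else ?T - ?x j) = real t + real k - 1 - real (c j + (k - 1 - j))" using False unfolding lr_def by simp
            show ?thesis unfolding e e2 by (rule step_notS) (use cj j t in auto)
          qed
        qed
        also have "\<dots> = Af k ?c' (t - 1)" unfolding Af_def by simp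
        finally have "?w S * Af k c t / ?P = Af k ?c' (t - 1)" .
        moreover have "tm S = (?w S * Af k c t / ?P) * Dm k (?y S)"
          unfolding tm_def by (simp add: mult_ac divide_inverse)
        ultimately show ?thesis unfolding Gc' by simp
      qed
    qed
  qed
  finally show ?thesis by simp
qed




lemma Dm_cong: "(\<And>i. i < k \<Longrightarrow> x i = y i) \<Longrightarrow> Dm k x = Dm k y"
  unfolding Dm_def by (intro arg_cong[where f=det] eq_matI) auto

lemma VS_finite: "finite (VS k c)"
  by (rule finite_subset[of _ "Pow {0..<k}"]) (auto simp: VS_def)

lemma Gv_nonneg_aux: "Gv k c t = 0 \<or> Gv k c t > 0 \<Longrightarrow> Gv k c t \<ge> 0" by auto

lemma Gv_pos: "validc k c \<Longrightarrow> (\<forall>j<k. c j \<le> t) \<Longrightarrow> Gv k c t > 0"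
proof (induct t arbitrary: c)
  case 0
  hence c0: "\<And>j. j < k \<Longrightarrow> c j = 0" by auto
  have "Dm k (lr k c) = Dm k (\<lambda>i. real (k - 1 - i))"
    by (rule Dm_cong) (simp add: lr_def c0)
  also have "\<dots> > 0" unfolding Dm_delta by (intro prod_pos) auto
  finally have "Dm k (lr k c) > 0" .
  thus ?case unfolding Gv_def using 0 Af_pos by simp
next
  case (Suc t)
  let ?S0 = "{j\<in>{0..<k}. 0 < c j}"
  have S0: "?S0 \<in> VS k c" unfolding VS_def by auto
  have d0: "dec c ?S0 = (\<lambda>j. if j < k then c j - 1 else c j)"
    unfolding dec_def by (auto intro!: ext)
  have v0: "validc k (dec c ?S0)" using Suc.prems(1) unfolding d0 validc_def by auto
  have l0: "\<forall>j<k. dec c ?S0 j \<le> t" using Suc.prems(2) unfolding d0 by auto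
  have pos0: "Gv k (dec c ?S0) t > 0" using Suc.hyps[OF v0 l0] .
  have nn: "\<forall>S\<in>VS k c. Gv k (dec c S) t \<ge> 0"
  proof
    fix S assume "S \<in> VS k c"
    show "Gv k (dec c S) t \<ge> 0"
    proof (cases "validc k (dec c S) \<and> (\<forall>j<k. dec c S j \<le> t)")
      case True thus ?thesis using Suc.hyps[of "dec c S"] by auto
    next
      case False thus ?thesis unfolding Gv_def by auto
    qed
  qed
  have "Gv k c (Suc t) = (\<Sum>S\<in>VS k c. Gv k (dec c S) t)"
    using Gv_rec[OF Suc.prems] by simp
  also have "\<dots> > 0"
    by (rule sum_pos2[where f="\<lambda>S. Gv k (dec c S) t" and i="?S0"]) (use VS_finite S0 pos0 nn in auto)
  finally show ?case .
qed

lemma Dm_ge1: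
  assumes "validc k c"
  shows "Dm k (lr k c) \<ge> 1"
proof -
  have "\<forall>j<k. c j \<le> c 0" using validc_le0[OF assms] by auto
  hence "Gv k c (c 0) > 0" using Gv_pos[OF assms] by auto
  hence pos: "Dm k (lr k c) > 0" unfolding Gv_def using Af_pos[of k c "c 0"]
    by (auto split: if_splits simp: zero_less_mult_iff)
  have "Dm k (lr k c) \<in> \<int>" by (rule Dm_Ints) (simp add: lr_def)
  then obtain z where z: "Dm k (lr k c) = of_int z" by (auto elim: Ints_cases)
  thus ?thesis using pos by simp
qed

definition dg :: "nat \<Rightarrow> (nat \<Rightarrow> nat) \<Rightarrow> (nat \<times> nat) set" where
  "dg k c = {(i,j). j < k \<and> i < c j}"

definition ssytD :: "(nat \<times> nat) set \<Rightarrow> nat \<Rightarrow> (nat \<times> nat \<Rightarrow> nat) set" where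
  "ssytD D t = {T. (\<forall>c. c \<notin> D \<longrightarrow> T c = 0)
     \<and> (\<forall>c\<in>D. T c \<in> {1..t})
     \<and> (\<forall>i j. (i, Suc j) \<in> D \<longrightarrow> T (i, j) \<le> T (i, Suc j))
     \<and> (\<forall>i j. (Suc i, j) \<in> D \<longrightarrow> T (i, j) < T (Suc i, j))}"

lemma finite_zero_outside:
  assumes "finite D" "finite B"
  shows "finite {T::'a \<Rightarrow> nat. (\<forall>x. x \<notin> D \<longrightarrow> T x = 0) \<and> (\<forall>x\<in>D. T x \<in> B)}"
proof -
  have "{T::'a \<Rightarrow> nat. (\<forall>x. x \<notin> D \<longrightarrow> T x = 0) \<and> (\<forall>x\<in>D. T x \<in> B)} \<subseteq>
      (\<lambda>g x. if x \<in> D then g x else 0) ` (PiE D (\<lambda>_. B))"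
  proof
    fix T assume T: "T \<in> {T::'a \<Rightarrow> nat. (\<forall>x. x \<notin> D \<longrightarrow> T x = 0) \<and> (\<forall>x\<in>D. T x \<in> B)}"
    have "T = (\<lambda>x. if x \<in> D then restrict T D x else 0)" using T by (auto intro!: ext)
    moreover have "restrict T D \<in> PiE D (\<lambda>_. B)" using T by auto
    ultimately show "T \<in> (\<lambda>g x. if x \<in> D then g x else 0) ` (PiE D (\<lambda>_. B))" by blast
  qed
  moreover have "finite (PiE D (\<lambda>_. B))" using assms by (intro finite_PiE) auto
  ultimately show ?thesis using finite_subset by blast
qed

lemma ssytD_finite: "finite D \<Longrightarrow> finite (ssytD D t)"
  by (rule finite_subset[OF _ finite_zero_outside[of D "{1..t}"]]) (auto simp: ssytD_def)

lemma dg_finite: "finite (dg k c)"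
  by (rule finite_subset[of _ "{..<Max (insert 0 (c ` {..<k}))} \<times> {..<k}"])
     (auto simp: dg_def intro: less_le_trans)

definition VV :: "nat \<Rightarrow> (nat \<Rightarrow> nat) \<Rightarrow> nat set set" where
  "VV k c = {S\<in>VS k c. validc k (dec c S)}"

definition extT :: "(nat \<Rightarrow> nat) \<Rightarrow> nat set \<Rightarrow> nat \<Rightarrow> (nat \<times> nat \<Rightarrow> nat) \<Rightarrow> (nat \<times> nat \<Rightarrow> nat)" where
  "extT c S t T = (\<lambda>(i,j). if j \<in> S \<and> i = c j - 1 then t else T (i,j))"




lemma dg_dec:
  assumes S: "S \<in> VS k c"
  shows "(i,j) \<in> dg k (dec c S) \<longleftrightarrow> (i,j) \<in> dg k c \<and> \<not> (j \<in> S \<and> i = c j - 1)"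
  using S unfolding VS_def dg_def dec_def by auto

lemma new_in_dg:
  assumes S: "S \<in> VS k c" "j \<in> S"
  shows "(c j - 1, j) \<in> dg k c"
  using S unfolding VS_def dg_def by auto

lemma ssytD_le: "T \<in> ssytD D t \<Longrightarrow> x \<in> D \<Longrightarrow> T x \<le> t"
  unfolding ssytD_def by auto

lemma ext_mem:
  assumes S: "S \<in> VV k c" and v: "validc k c" and t: "0 < t"
    and T: "T \<in> ssytD (dg k (dec c S)) (t - 1)"
  shows "extT c S t T \<in> ssytD (dg k c) t"
proof -
  have SV: "S \<in> VS k c" and vc': "validc k (dec c S)" using S unfolding VV_def by auto
  let ?c' = "dec c S"
  let ?E = "extT c S t T"
  have E_new: "\<And>i j. j \<in> S \<and> i = c j - 1 \<Longrightarrow> ?E (i,j) = t" unfolding extT_def by auto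
  have E_old: "\<And>i j. \<not> (j \<in> S \<and> i = c j - 1) \<Longrightarrow> ?E (i,j) = T (i,j)" unfolding extT_def by auto
  have T0: "\<And>x. x \<notin> dg k ?c' \<Longrightarrow> T x = 0" using T unfolding ssytD_def by auto
  have T1: "\<And>x. x \<in> dg k ?c' \<Longrightarrow> T x \<in> {1..t-1}" using T unfolding ssytD_def by auto
  have Trow: "\<And>i j. (i, Suc j) \<in> dg k ?c' \<Longrightarrow> T (i, j) \<le> T (i, Suc j)" using T unfolding ssytD_def by auto
  have Tcol: "\<And>i j. (Suc i, j) \<in> dg k ?c' \<Longrightarrow> T (i, j) < T (Suc i, j)" using T unfolding ssytD_def by auto
  have a: "\<forall>x. x \<notin> dg k c \<longrightarrow> ?E x = 0"
  proof (intro allI impI)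
    fix x assume x: "x \<notin> dg k c"
    obtain i j where x': "x = (i,j)" by (cases x)
    have "\<not> (j \<in> S \<and> i = c j - 1)" using new_in_dg[OF SV] x x' by auto
    thus "?E x = 0" using E_old T0 dg_dec[OF SV] x x' by auto
  qed
  have b: "\<forall>x\<in>dg k c. ?E x \<in> {1..t}"
  proof
    fix x assume x: "x \<in> dg k c"
    obtain i j where x': "x = (i,j)" by (cases x)
    show "?E x \<in> {1..t}"
    proof (cases "j \<in> S \<and> i = c j - 1")
      case True thus ?thesis using E_new x' t by auto
    next
      case False
      hence "(i,j) \<in> dg k ?c'" using dg_dec[OF SV] x x' by auto
      thus ?thesis using T1[of "(i,j)"] E_old[OF False] x' by auto
    qed
  qed
  have c: "\<forall>i j. (i, Suc j) \<in> dg k c \<longrightarrow> ?E (i, j) \<le> ?E (i, Suc j)"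
  proof (intro allI impI)
    fix i j assume ij: "(i, Suc j) \<in> dg k c"
    have ij0: "(i, j) \<in> dg k c" using ij v unfolding dg_def validc_def
      by (auto intro: less_le_trans)
    show "?E (i, j) \<le> ?E (i, Suc j)"
    proof (cases "Suc j \<in> S \<and> i = c (Suc j) - 1")
      case True
      thus ?thesis using E_new[OF True] b ij0 by auto
    next
      case False
      hence old1: "(i, Suc j) \<in> dg k ?c'" using dg_dec[OF SV] ij by auto
      show ?thesis
      proof (cases "j \<in> S \<and> i = c j - 1")
        case True
        have "?c' (Suc j) \<le> ?c' j" using vc' old1 unfolding validc_def dg_def by auto
        moreover have "?c' j = c j - 1" using True unfolding dec_def by auto
        moreover have "i < ?c' (Suc j)" using old1 unfolding dg_def by auto
        ultimately show ?thesis using True by auto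
      next
        case False2: False
        thus ?thesis using E_old[OF False] E_old[OF False2] Trow[OF old1] by simp
      qed
    qed
  qed
  have d: "\<forall>i j. (Suc i, j) \<in> dg k c \<longrightarrow> ?E (i, j) < ?E (Suc i, j)"
  proof (intro allI impI)
    fix i j assume ij: "(Suc i, j) \<in> dg k c"
    have nn: "\<not> (j \<in> S \<and> i = c j - 1)" using ij unfolding dg_def by auto
    have ij0: "(i, j) \<in> dg k ?c'" using ij nn dg_dec[OF SV] unfolding dg_def by auto
    show "?E (i, j) < ?E (Suc i, j)"
    proof (cases "j \<in> S \<and> Suc i = c j - 1")
      case True
      thus ?thesis using E_new[OF True] E_old[OF nn] T1[OF ij0] t by auto
    next
      case False
      hence "(Suc i, j) \<in> dg k ?c'" using dg_dec[OF SV] ij by auto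
      thus ?thesis using E_old[OF False] E_old[OF nn] Tcol by auto
    qed
  qed
  show ?thesis unfolding ssytD_def using a b c d by blast
qed

lemma ext_inj:
  assumes S: "S \<in> VS k c"
  shows "inj_on (extT c S t) (ssytD (dg k (dec c S)) t')"
proof (rule inj_onI)
  fix T T' assume T: "T \<in> ssytD (dg k (dec c S)) t'" and T': "T' \<in> ssytD (dg k (dec c S)) t'"
    and eq: "extT c S t T = extT c S t T'"
  show "T = T'"
  proof
    fix x :: "nat \<times> nat"
    obtain i j where x: "x = (i,j)" by (cases x)
    show "T x = T' x"
    proof (cases "j \<in> S \<and> i = c j - 1")
      case True
      hence "x \<notin> dg k (dec c S)" using dg_dec[OF S] x by auto
      hence "T x = 0" "T' x = 0" using T T' unfolding ssytD_def by blast+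
      thus ?thesis by simp
    next
      case False
      thus ?thesis using fun_cong[OF eq, of x] x unfolding extT_def by auto
    qed
  qed
qed

lemma ext_disj:
  assumes S1: "S1 \<in> VS k c" and S2: "S2 \<in> VS k c" and ne: "S1 \<noteq> S2" and t: "0 < t"
    and T1: "T1 \<in> ssytD (dg k (dec c S1)) (t - 1)" and T2: "T2 \<in> ssytD (dg k (dec c S2)) (t - 1)"
  shows "extT c S1 t T1 \<noteq> extT c S2 t T2"
proof
  assume eq: "extT c S1 t T1 = extT c S2 t T2"
  have "\<exists>j. (j \<in> S1 \<and> j \<notin> S2) \<or> (j \<in> S2 \<and> j \<notin> S1)" using ne by auto
  then obtain j where j: "(j \<in> S1 \<and> j \<notin> S2) \<or> (j \<in> S2 \<and> j \<notin> S1)" by blast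
  {
    fix Sa Sb Ta Tb assume Sa: "Sa \<in> VS k c" and Sb: "Sb \<in> VS k c" and ja: "j \<in> Sa" and jb: "j \<notin> Sb"
      and Tb: "Tb \<in> ssytD (dg k (dec c Sb)) (t - 1)" and e: "extT c Sa t Ta = extT c Sb t Tb"
    let ?x = "(c j - 1, j)"
    have "extT c Sa t Ta ?x = t" using ja unfolding extT_def by auto
    moreover have "extT c Sb t Tb ?x = Tb ?x" using jb unfolding extT_def by auto
    moreover have "?x \<in> dg k (dec c Sb)" using dg_dec[OF Sb] new_in_dg[OF Sa ja] jb by auto
    hence "Tb ?x \<le> t - 1" using ssytD_le[OF Tb] by auto
    ultimately have False using e t by auto
  }
  thus False using j S1 S2 T1 T2 eq by metis
qed

lemma s_rec:
  assumes v: "validc k c" and t: "0 < t"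
  shows "(\<Sum>S\<in>VV k c. card (ssytD (dg k (dec c S)) (t - 1))) \<le> card (ssytD (dg k c) t)"
proof -
  have VVsub: "VV k c \<subseteq> VS k c" unfolding VV_def by auto
  have finVV: "finite (VV k c)" using VS_finite VVsub finite_subset by blast
  let ?A = "\<lambda>S. extT c S t ` ssytD (dg k (dec c S)) (t - 1)"
  have "(\<Sum>S\<in>VV k c. card (ssytD (dg k (dec c S)) (t - 1))) = (\<Sum>S\<in>VV k c. card (?A S))"
    by (intro sum.cong refl card_image[symmetric] ext_inj) (use VVsub in auto)
  also have "\<dots> = card (\<Union>S\<in>VV k c. ?A S)"
  proof (rule card_UN_disjoint[symmetric])
    show "finite (VV k c)" by (rule finVV)
    show "\<forall>S\<in>VV k c. finite (?A S)" using ssytD_finite[OF dg_finite] by blast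
    show "\<forall>S\<in>VV k c. \<forall>S'\<in>VV k c. S \<noteq> S' \<longrightarrow> ?A S \<inter> ?A S' = {}"
    proof (intro ballI impI equals0I)
      fix S S' y assume S: "S \<in> VV k c" and S': "S' \<in> VV k c" and ne: "S \<noteq> S'" and y: "y \<in> ?A S \<inter> ?A S'"
      then obtain T1 T2 where T1: "T1 \<in> ssytD (dg k (dec c S)) (t - 1)" and T2: "T2 \<in> ssytD (dg k (dec c S')) (t - 1)"
        and e: "extT c S t T1 = extT c S' t T2" by auto
      show False using ext_disj[OF _ _ ne t T1 T2] S S' VVsub e by auto
    qed
  qed
  also have "\<dots> \<le> card (ssytD (dg k c) t)"
    by (intro card_mono ssytD_finite dg_finite) (use ext_mem v t in \<open>auto\<close>)
  finally show ?thesis .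
qed




lemma ssytD_empty: "ssytD {} t = {\<lambda>_. 0}"
  unfolding ssytD_def by auto

lemma Gv_zero_base:
  assumes c0: "\<forall>j<k. c j = 0"
  shows "Gv k c 0 = 1"
proof -
  have "Dm k (lr k c) = Dm k (\<lambda>i. real (k - 1 - i))"
    by (rule Dm_cong) (simp add: lr_def c0)
  hence D: "Dm k (lr k c) = (\<Prod>i<k. fact (k - 1 - i))" using Dm_delta by simp
  have A: "Af k c 0 = (\<Prod>j<k. 1 / fact (k - 1 - j))"
    unfolding Af_def by (intro prod.cong refl) (simp add: c0)
  have v: "validc k c" using c0 unfolding validc_def by auto
  have "Gv k c 0 = (\<Prod>i<k. fact (k - 1 - i)) * (\<Prod>j<k. 1 / fact (k - 1 - j))"
    unfolding Gv_def D A using v c0 by simp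
  also have "\<dots> = (\<Prod>i<k. fact (k - 1 - i) * (1 / fact (k - 1 - i)) :: real)"
    by (rule prod.distrib[symmetric])
  also have "\<dots> = 1" by simp
  finally show ?thesis .
qed

lemma s_ge_G: "validc k c \<Longrightarrow> Gv k c t \<le> real (card (ssytD (dg k c) t))"
proof (induct t arbitrary: c)
  case 0
  show ?case
  proof (cases "\<forall>j<k. c j = 0")
    case True
    hence "dg k c = {}" unfolding dg_def by auto
    thus ?thesis using Gv_zero_base[OF True] by (simp add: ssytD_empty)
  next
    case False thus ?thesis unfolding Gv_def by auto
  qed
next
  case (Suc t)
  show ?case
  proof (cases "\<forall>j<k. c j \<le> Suc t")
    case False thus ?thesis unfolding Gv_def by auto
  next
    case True
    have "Gv k c (Suc t) = (\<Sum>S\<in>VS k c. Gv k (dec c S) t)"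
      using Gv_rec[OF Suc.prems True] by simp
    also have "\<dots> \<le> (\<Sum>S\<in>VS k c. if S \<in> VV k c then real (card (ssytD (dg k (dec c S)) t)) else 0)"
    proof (rule sum_mono)
      fix S assume S: "S \<in> VS k c"
      show "Gv k (dec c S) t \<le> (if S \<in> VV k c then real (card (ssytD (dg k (dec c S)) t)) else 0)"
      proof (cases "S \<in> VV k c")
        case True
        hence "validc k (dec c S)" unfolding VV_def by auto
        thus ?thesis using Suc.hyps True by simp
      next
        case False
        hence "\<not> validc k (dec c S)" using S unfolding VV_def by auto
        thus ?thesis using False unfolding Gv_def by simp
      qed
    qed
    also have "\<dots> = (\<Sum>S\<in>VV k c. real (card (ssytD (dg k (dec c S)) t)))"
    proof -
      have "VS k c \<inter> VV k c = VV k c" unfolding VV_def by auto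
      moreover have "(\<Sum>S\<in>VS k c. if S \<in> VV k c then real (card (ssytD (dg k (dec c S)) t)) else 0)
          = (\<Sum>S\<in>VS k c \<inter> VV k c. real (card (ssytD (dg k (dec c S)) t)))"
        by (rule sum.inter_restrict[symmetric]) (rule VS_finite)
      ultimately show ?thesis by simp
    qed
    also have "\<dots> \<le> real (card (ssytD (dg k c) (Suc t)))"
      using s_rec[OF Suc.prems, of "Suc t"] by (simp flip: of_nat_sum)
    finally show ?thesis .
  qed
qed

lemma s_ge_Af:
  assumes "validc k c" "\<forall>j<k. c j \<le> t"
  shows "Af k c t \<le> real (card (ssytD (dg k c) t))"
proof -
  have "Af k c t \<le> Dm k (lr k c) * Af k c t"
    using Dm_ge1[OF assms(1)] Af_pos[of k c t] by simp
  also have "\<dots> = Gv k c t" unfolding Gv_def using assms by simp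
  also have "\<dots> \<le> real (card (ssytD (dg k c) t))" by (rule s_ge_G[OF assms(1)])
  finally show ?thesis .
qed




lemma rank_eq:
  fixes A :: "nat set"
  assumes "finite A" "x \<in> A" "y \<in> A" "card {a\<in>A. a \<le> x} = card {a\<in>A. a \<le> y}"
  shows "x = y"
proof (rule ccontr)
  assume "x \<noteq> y"
  then consider "x < y" | "y < x" by linarith
  thus False
  proof cases
    case 1
    have "y \<in> {a\<in>A. a \<le> y}" "y \<notin> {a\<in>A. a \<le> x}" using 1 assms by auto
    moreover have "{a\<in>A. a \<le> x} \<subseteq> {a\<in>A. a \<le> y}" using 1 by auto
    ultimately have "{a\<in>A. a \<le> x} \<subset> {a\<in>A. a \<le> y}" by blast
    hence "card {a\<in>A. a \<le> x} < card {a\<in>A. a \<le> y}" using assms(1) by (intro psubset_card_mono) auto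
    thus False using assms(4) by simp
  next
    case 2
    have "x \<in> {a\<in>A. a \<le> x}" "x \<notin> {a\<in>A. a \<le> y}" using 2 assms by auto
    moreover have "{a\<in>A. a \<le> y} \<subseteq> {a\<in>A. a \<le> x}" using 2 by auto
    ultimately have "{a\<in>A. a \<le> y} \<subset> {a\<in>A. a \<le> x}" by blast
    hence "card {a\<in>A. a \<le> y} < card {a\<in>A. a \<le> x}" using assms(1) by (intro psubset_card_mono) auto
    thus False using assms(4) by simp
  qed
qed

definition smono_on :: "nat set \<Rightarrow> (nat \<Rightarrow> nat) \<Rightarrow> bool" where
  "smono_on I f \<longleftrightarrow> (\<forall>i\<in>I. \<forall>i'\<in>I. i < i' \<longrightarrow> f i < f i')"

lemma smono_inj: "smono_on I f \<Longrightarrow> inj_on f I"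
  unfolding smono_on_def inj_on_def by (metis less_irrefl nat_neq_iff)

lemma smono_le_iff: "smono_on I f \<Longrightarrow> i \<in> I \<Longrightarrow> i' \<in> I \<Longrightarrow> f i' \<le> f i \<longleftrightarrow> i' \<le> i"
  unfolding smono_on_def by (metis leD le_less linorder_le_less_linear)

lemma smono_rank:
  assumes "smono_on I f" "i \<in> I"
  shows "card {a\<in>f ` I. a \<le> f i} = card {i'\<in>I. i' \<le> i}"
proof -
  have "{a\<in>f ` I. a \<le> f i} = f ` {i'\<in>I. i' \<le> i}" using smono_le_iff[OF assms(1) assms(2)] by auto
  moreover have "inj_on f {i'\<in>I. i' \<le> i}" using smono_inj[OF assms(1)] by (rule inj_on_subset) auto
  ultimately show ?thesis by (simp add: card_image)
qed

lemma smono_same_image: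
  assumes "finite I" "smono_on I f" "smono_on I g" "f ` I = g ` I" "i \<in> I"
  shows "f i = g i"
proof (rule rank_eq[of "f ` I"])
  show "finite (f ` I)" using assms(1) by simp
  show "f i \<in> f ` I" using assms(5) by simp
  show "g i \<in> f ` I" using assms(4,5) by simp
  have "card {a\<in>f ` I. a \<le> f i} = card {i'\<in>I. i' \<le> i}" by (rule smono_rank[OF assms(2,5)])
  also have "\<dots> = card {a\<in>g ` I. a \<le> g i}" by (rule smono_rank[OF assms(3,5), symmetric])
  finally show "card {a\<in>f ` I. a \<le> f i} = card {a\<in>f ` I. a \<le> g i}" using assms(4) by simp
qed

lemma col_strict:
  fixes T :: "nat \<times> nat \<Rightarrow> nat"
  assumes col: "\<forall>i j. (Suc i, j) \<in> dg k c \<longrightarrow> T (i, j) < T (Suc i, j)"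
    and j: "j < k" and ii: "i < i'" "i' < c j"
  shows "T (i, j) < T (i', j)"
  using ii
proof (induct i')
  case 0 thus ?case by simp
next
  case (Suc i')
  have s: "T (i', j) < T (Suc i', j)" using col Suc.prems j unfolding dg_def by auto
  show ?case
  proof (cases "i = i'")
    case True thus ?thesis using s by simp
  next
    case False
    hence "T (i, j) < T (i', j)" using Suc by auto
    thus ?thesis using s by simp
  qed
qed

lemma col_smono:
  fixes T :: "nat \<times> nat \<Rightarrow> nat"
  assumes col: "\<forall>i j. (Suc i, j) \<in> dg k c \<longrightarrow> T (i, j) < T (Suc i, j)" and j: "j < k"
  shows "smono_on {..<c j} (\<lambda>i. T (i, j))"
  unfolding smono_on_def using col_strict[OF col j] by auto

definition rnk :: "'a set \<Rightarrow> ('a \<Rightarrow> nat) \<Rightarrow> 'a \<Rightarrow> nat" where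
  "rnk D f u = card {v\<in>D. f v \<le> f u}"

lemma rnk_less:
  assumes "finite D" "u \<in> D" "v \<in> D" "f u < f v"
  shows "rnk D f u < rnk D f v"
proof -
  have "v \<in> {w\<in>D. f w \<le> f v}" "v \<notin> {w\<in>D. f w \<le> f u}" using assms by auto
  moreover have "{w\<in>D. f w \<le> f u} \<subseteq> {w\<in>D. f w \<le> f v}" using assms by auto
  ultimately have "{w\<in>D. f w \<le> f u} \<subset> {w\<in>D. f w \<le> f v}" by blast
  thus ?thesis unfolding rnk_def using assms(1) by (intro psubset_card_mono) auto
qed

lemma rnk_le_iff:
  assumes "finite D" "inj_on f D" "u \<in> D" "v \<in> D"
  shows "rnk D f u < rnk D f v \<longleftrightarrow> f u < f v"
proof
  assume "rnk D f u < rnk D f v"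
  show "f u < f v"
  proof (rule ccontr)
    assume "\<not> f u < f v"
    hence "f v < f u \<or> u = v" using assms(2-4) by (metis inj_onD linorder_neqE_nat)
    thus False using rnk_less[OF assms(1) assms(4) assms(3), of f] \<open>rnk D f u < rnk D f v\<close> by auto
  qed
qed (rule rnk_less[OF assms(1,3,4)])

lemma rnk_bij:
  assumes "finite D" "inj_on f D"
  shows "bij_betw (rnk D f) D {1..card D}"
proof -
  have inj: "inj_on (rnk D f) D"
  proof (rule inj_onI)
    fix u v assume uv: "u \<in> D" "v \<in> D" "rnk D f u = rnk D f v"
    show "u = v"
    proof (rule ccontr)
      assume "u \<noteq> v"
      hence "f u \<noteq> f v" using assms(2) uv inj_onD by metis
      hence "f u < f v \<or> f v < f u" by auto
      thus False using rnk_less[OF assms(1)] uv by (metis less_irrefl)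
    qed
  qed
  have sub: "rnk D f ` D \<subseteq> {1..card D}"
  proof
    fix x assume "x \<in> rnk D f ` D"
    then obtain u where u: "u \<in> D" "x = rnk D f u" by auto
    have "{v\<in>D. f v \<le> f u} \<noteq> {}" using u by auto
    hence "1 \<le> x" unfolding u rnk_def using assms(1) by (simp add: Suc_le_eq card_gt_0_iff)
    moreover have "x \<le> card D" unfolding u rnk_def using assms(1) by (intro card_mono) auto
    ultimately show "x \<in> {1..card D}" by simp
  qed
  have "card (rnk D f ` D) = card {1..card D}" using card_image[OF inj] by simp
  hence "rnk D f ` D = {1..card D}" using sub by (intro card_subset_eq) auto
  thus ?thesis using inj unfolding bij_betw_def by simp
qed




definition sytD :: "(nat \<times> nat) set \<Rightarrow> nat \<Rightarrow> (nat \<times> nat \<Rightarrow> nat) set" where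
  "sytD D n = {T. (\<forall>c. c \<notin> D \<longrightarrow> T c = 0)
     \<and> bij_betw T D {1..n}
     \<and> (\<forall>i j. (i, Suc j) \<in> D \<longrightarrow> T (i, j) < T (i, Suc j))
     \<and> (\<forall>i j. (Suc i, j) \<in> D \<longrightarrow> T (i, j) < T (Suc i, j))}"

lemma sytD_finite: "finite D \<Longrightarrow> finite (sytD D n)"
  by (rule finite_subset[OF _ finite_zero_outside[of D "{1..n}"]])
     (auto simp: sytD_def bij_betw_def)

definition key :: "nat \<Rightarrow> (nat \<times> nat \<Rightarrow> nat) \<Rightarrow> nat \<times> nat \<Rightarrow> nat" where
  "key k P u = P u * k + snd u"

lemma divmod_aux:
  fixes a b j j' k :: nat
  assumes "a * k + j = b * k + j'" "j < k" "j' < k"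
  shows "j = j' \<and> a = b"
proof -
  have j1: "j = (a * k + j) mod k" using assms(2) by simp
  have j2: "j' = (b * k + j') mod k" using assms(3) by simp
  have jj: "j = j'"
  proof -
    have "j = (b * k + j') mod k" using j1 by (simp only: assms(1))
    also have "\<dots> = j'" using j2 by (rule sym)
    finally show ?thesis .
  qed
  hence "a * k = b * k" using assms(1) by simp
  hence "a = b" using assms(2) by simp
  thus ?thesis using jj by simp
qed

lemma key_less_imp:
  assumes "key k P u < key k P v" "snd u < k" "snd v < k"
  shows "P u \<le> P v"
proof (rule ccontr)
  assume "\<not> P u \<le> P v"
  hence "Suc (P v) \<le> P u" by simp
  hence "Suc (P v) * k \<le> P u * k" by (rule mult_le_mono1)
  thus False using assms unfolding key_def by simp
qed

lemma ssytD_col: "P \<in> ssytD D t \<Longrightarrow> \<forall>i j. (Suc i, j) \<in> D \<longrightarrow> P (i, j) < P (Suc i, j)"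
  unfolding ssytD_def by blast
lemma ssytD_row: "P \<in> ssytD D t \<Longrightarrow> \<forall>i j. (i, Suc j) \<in> D \<longrightarrow> P (i, j) \<le> P (i, Suc j)"
  unfolding ssytD_def by blast
lemma ssytD_zero: "P \<in> ssytD D t \<Longrightarrow> x \<notin> D \<Longrightarrow> P x = 0"
  unfolding ssytD_def by blast
lemma ssytD_range: "P \<in> ssytD D t \<Longrightarrow> x \<in> D \<Longrightarrow> P x \<in> {1..t}"
  unfolding ssytD_def by blast

lemma key_inj:
  assumes P: "P \<in> ssytD (dg k c) t"
  shows "inj_on (key k P) (dg k c)"
proof (rule inj_onI)
  fix u v assume u: "u \<in> dg k c" and v: "v \<in> dg k c" and e: "key k P u = key k P v"
  obtain i j where uij: "u = (i,j)" by (cases u)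
  obtain i' j' where vij: "v = (i',j')" by (cases v)
  have jk: "j < k" "j' < k" "i < c j" "i' < c j'" using u v uij vij unfolding dg_def by auto
  have "j = j' \<and> P u = P v" using divmod_aux[of "P u" k j "P v" j'] e jk uij vij unfolding key_def by simp
  hence jj: "j = j'" and pe: "P (i,j) = P (i',j)" using uij vij by auto
  show "u = v"
  proof (rule ccontr)
    assume "u \<noteq> v"
    hence "i \<noteq> i'" using uij vij jj by auto
    hence "i < i' \<or> i' < i" by auto
    thus False using col_strict[OF ssytD_col[OF P] jk(1)] jk jj pe by (metis less_irrefl)
  qed
qed

definition stdQ :: "nat \<Rightarrow> (nat \<Rightarrow> nat) \<Rightarrow> (nat \<times> nat \<Rightarrow> nat) \<Rightarrow> nat \<times> nat \<Rightarrow> nat" where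
  "stdQ k c P u = (if u \<in> dg k c then rnk (dg k c) (key k P) u else 0)"

lemma stdQ_bij:
  assumes P: "P \<in> ssytD (dg k c) t"
  shows "bij_betw (stdQ k c P) (dg k c) {1..card (dg k c)}"
proof -
  have "bij_betw (rnk (dg k c) (key k P)) (dg k c) {1..card (dg k c)}"
    by (rule rnk_bij[OF dg_finite key_inj[OF P]])
  thus ?thesis by (rule bij_betw_cong[THEN iffD1, rotated]) (simp add: stdQ_def)
qed

lemma stdQ_less_iff:
  assumes P: "P \<in> ssytD (dg k c) t" and u: "u \<in> dg k c" and v: "v \<in> dg k c"
  shows "stdQ k c P u < stdQ k c P v \<longleftrightarrow> key k P u < key k P v"
  using rnk_le_iff[OF dg_finite key_inj[OF P] u v] u v unfolding stdQ_def by simp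

lemma dg_snd: "u \<in> dg k c \<Longrightarrow> snd u < k" unfolding dg_def by auto

lemma stdQ_syt:
  assumes v: "validc k c" and P: "P \<in> ssytD (dg k c) t"
  shows "stdQ k c P \<in> sytD (dg k c) (card (dg k c))"
proof -
  have a: "\<forall>x. x \<notin> dg k c \<longrightarrow> stdQ k c P x = 0" unfolding stdQ_def by simp
  have c: "\<forall>i j. (i, Suc j) \<in> dg k c \<longrightarrow> stdQ k c P (i, j) < stdQ k c P (i, Suc j)"
  proof (intro allI impI)
    fix i j assume ij: "(i, Suc j) \<in> dg k c"
    have ij0: "(i, j) \<in> dg k c" using ij v unfolding dg_def validc_def by (auto intro: less_le_trans)
    have "P (i,j) \<le> P (i, Suc j)" using ssytD_row[OF P] ij by blast
    hence m: "P (i,j) * k \<le> P (i, Suc j) * k" by (rule mult_le_mono1)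
    have "key k P (i,j) < key k P (i, Suc j)" unfolding key_def snd_conv using m by linarith
    thus "stdQ k c P (i, j) < stdQ k c P (i, Suc j)" using stdQ_less_iff[OF P ij0 ij] by simp
  qed
  have d: "\<forall>i j. (Suc i, j) \<in> dg k c \<longrightarrow> stdQ k c P (i, j) < stdQ k c P (Suc i, j)"
  proof (intro allI impI)
    fix i j assume ij: "(Suc i, j) \<in> dg k c"
    have ij0: "(i, j) \<in> dg k c" using ij unfolding dg_def by auto
    have "P (i,j) < P (Suc i, j)" using ssytD_col[OF P] ij by blast
    hence "Suc (P (i,j)) * k \<le> P (Suc i, j) * k" by (intro mult_le_mono1) simp
    hence m: "P (i,j) * k + k \<le> P (Suc i, j) * k" by simp
    have "j < k" using ij unfolding dg_def by auto
    hence "key k P (i,j) < key k P (Suc i, j)" unfolding key_def snd_conv using m by linarith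
    thus "stdQ k c P (i, j) < stdQ k c P (Suc i, j)" using stdQ_less_iff[OF P ij0 ij] by simp
  qed
  show ?thesis unfolding sytD_def using a stdQ_bij[OF P] c d by blast
qed

definition hfun :: "nat \<Rightarrow> (nat \<Rightarrow> nat) \<Rightarrow> (nat \<times> nat \<Rightarrow> nat) \<Rightarrow> nat \<times> nat \<Rightarrow> nat" where
  "hfun k c P u = P u + stdQ k c P u"

lemma hfun_mono:
  assumes P: "P \<in> ssytD (dg k c) t" and u: "u \<in> dg k c" and v: "v \<in> dg k c"
    and lt: "stdQ k c P u < stdQ k c P v"
  shows "hfun k c P u < hfun k c P v"
proof -
  have "key k P u < key k P v" using stdQ_less_iff[OF P u v] lt by simp
  hence "P u \<le> P v" using key_less_imp dg_snd u v by blast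
  thus ?thesis using lt unfolding hfun_def by simp
qed

definition gfun :: "nat \<Rightarrow> (nat \<Rightarrow> nat) \<Rightarrow> (nat \<times> nat \<Rightarrow> nat) \<Rightarrow> nat \<Rightarrow> nat" where
  "gfun k c P m = hfun k c P (inv_into (dg k c) (stdQ k c P) m)"

lemma gfun_props:
  assumes P: "P \<in> ssytD (dg k c) t"
  shows "smono_on {1..card (dg k c)} (gfun k c P)"
    and "gfun k c P ` {1..card (dg k c)} = hfun k c P ` dg k c"
proof -
  let ?D = "dg k c" and ?Q = "stdQ k c P" and ?I = "{1..card (dg k c)}"
  have b: "bij_betw ?Q ?D ?I" by (rule stdQ_bij[OF P])
  have bi: "bij_betw (inv_into ?D ?Q) ?I ?D" by (rule bij_betw_inv_into[OF b])
  have inv_in: "\<And>m. m \<in> ?I \<Longrightarrow> inv_into ?D ?Q m \<in> ?D" using bi bij_betwE by blast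
  have Qinv: "\<And>m. m \<in> ?I \<Longrightarrow> ?Q (inv_into ?D ?Q m) = m"
    using b by (meson bij_betw_inv_into_right)
  show "smono_on ?I (gfun k c P)"
    unfolding smono_on_def gfun_def
  proof (intro ballI impI)
    fix m m' assume m: "m \<in> ?I" and m': "m' \<in> ?I" and lt: "m < m'"
    show "hfun k c P (inv_into ?D ?Q m) < hfun k c P (inv_into ?D ?Q m')"
      by (rule hfun_mono[OF P inv_in[OF m] inv_in[OF m']]) (use Qinv[OF m] Qinv[OF m'] lt in simp)
  qed
  have "inv_into ?D ?Q ` ?I = ?D" using bi by (simp add: bij_betw_def)
  thus "gfun k c P ` ?I = hfun k c P ` ?D" unfolding gfun_def by (simp add: image_image[symmetric])
qed

lemma std_inj:
  assumes P: "P \<in> ssytD (dg k c) t" and P': "P' \<in> ssytD (dg k c) t"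
    and eQ: "stdQ k c P = stdQ k c P'" and eA: "hfun k c P ` dg k c = hfun k c P' ` dg k c"
  shows "P = P'"
proof
  fix u :: "nat \<times> nat"
  show "P u = P' u"
  proof (cases "u \<in> dg k c")
    case False thus ?thesis using ssytD_zero[OF P] ssytD_zero[OF P'] by simp
  next
    case True
    let ?D = "dg k c" and ?Q = "stdQ k c P" and ?I = "{1..card (dg k c)}"
    have b: "bij_betw ?Q ?D ?I" by (rule stdQ_bij[OF P])
    have m: "?Q u \<in> ?I" using b True bij_betwE by blast
    have iv: "inv_into ?D ?Q (?Q u) = u" using b True by (simp add: bij_betw_def inv_into_f_f)
    have "gfun k c P (?Q u) = gfun k c P' (?Q u)"
    proof (rule smono_same_image[of ?I "gfun k c P" "gfun k c P'" "?Q u"])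
      show "finite ?I" by simp
      show "smono_on ?I (gfun k c P)" by (rule gfun_props(1)[OF P])
      show "smono_on ?I (gfun k c P')" using gfun_props(1)[OF P'] eQ by simp
      show "gfun k c P ` ?I = gfun k c P' ` ?I" using gfun_props(2)[OF P] gfun_props(2)[OF P'] eQ eA by simp
    qed (rule m)
    hence "hfun k c P u = hfun k c P' u" unfolding gfun_def eQ[symmetric] iv by simp
    thus ?thesis unfolding hfun_def eQ by simp
  qed
qed

lemma card_ssyt_le:
  assumes v: "validc k c"
  shows "card (ssytD (dg k c) t) \<le> card (sytD (dg k c) (card (dg k c))) * ((t + card (dg k c)) choose card (dg k c))"
proof -
  let ?D = "dg k c" and ?n = "card (dg k c)"
  let ?Phi = "\<lambda>P. (stdQ k c P, hfun k c P ` ?D)"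
  let ?B = "sytD ?D ?n \<times> {A. A \<subseteq> {1..t + ?n} \<and> card A = ?n}"
  have inj: "inj_on ?Phi (ssytD ?D t)"
    by (rule inj_onI) (use std_inj in auto)
  have into: "?Phi ` ssytD ?D t \<subseteq> ?B"
  proof
    fix y assume "y \<in> ?Phi ` ssytD ?D t"
    then obtain P where P: "P \<in> ssytD ?D t" and y: "y = ?Phi P" by auto
    have b: "bij_betw (stdQ k c P) ?D {1..?n}" by (rule stdQ_bij[OF P])
    have sub: "hfun k c P ` ?D \<subseteq> {1..t + ?n}"
    proof
      fix x assume "x \<in> hfun k c P ` ?D"
      then obtain u where u: "u \<in> ?D" "x = hfun k c P u" by auto
      have "P u \<in> {1..t}" by (rule ssytD_range[OF P u(1)])
      moreover have "stdQ k c P u \<in> {1..?n}" using b u(1) bij_betwE by blast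
      ultimately show "x \<in> {1..t + ?n}" unfolding u hfun_def by auto
    qed
    have "inj_on (hfun k c P) ?D"
    proof (rule inj_onI)
      fix u v assume u: "u \<in> ?D" and v: "v \<in> ?D" and e: "hfun k c P u = hfun k c P v"
      show "u = v"
      proof (rule ccontr)
        assume "u \<noteq> v"
        hence "stdQ k c P u \<noteq> stdQ k c P v" using b u v by (metis bij_betw_def inj_onD)
        hence "stdQ k c P u < stdQ k c P v \<or> stdQ k c P v < stdQ k c P u" by auto
        thus False using hfun_mono[OF P u v] hfun_mono[OF P v u] e by auto
      qed
    qed
    hence "card (hfun k c P ` ?D) = ?n" by (simp add: card_image)
    thus "y \<in> ?B" using y sub stdQ_syt[OF v P] by auto
  qed
  have finB: "finite ?B" using sytD_finite[OF dg_finite] by simp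
  have "card (ssytD ?D t) = card (?Phi ` ssytD ?D t)" by (rule card_image[OF inj, symmetric])
  also have "\<dots> \<le> card ?B" by (rule card_mono[OF finB into])
  also have "\<dots> = card (sytD ?D ?n) * ((t + ?n) choose ?n)"
    by (simp add: card_cartesian_product n_subsets)
  finally show ?thesis .
qed




lemma dg_swap: "dg k c = (\<lambda>(j,i). (i,j)) ` Sigma {..<k} (\<lambda>j. {..<c j})"
  unfolding dg_def by auto

lemma inj_swap: "inj_on (\<lambda>(j::nat,i::nat). (i,j)) A"
  by (auto simp: inj_on_def)

lemma dg_card: "card (dg k c) = (\<Sum>j<k. c j)"
  unfolding dg_swap by (simp add: card_image[OF inj_swap] card_SigmaI)

lemma prod_dg: "(\<Prod>u\<in>dg k c. g (snd u)) = (\<Prod>j<k. (g j :: real) ^ c j)"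
proof -
  have "(\<Prod>u\<in>dg k c. g (snd u)) = (\<Prod>(j,i)\<in>Sigma {..<k} (\<lambda>j. {..<c j}). g j)"
    unfolding dg_swap by (subst prod.reindex[OF inj_swap]) (simp add: case_prod_beta comp_def)
  also have "\<dots> = (\<Prod>j<k. \<Prod>i<c j. g j)" by (rule prod.Sigma[symmetric]) auto
  also have "\<dots> = (\<Prod>j<k. g j ^ c j)" by simp
  finally show ?thesis .
qed

lemma ssyt_upper:
  "card (ssytD (dg k c) n) \<le> (\<Prod>j<k. n choose c j)"
proof -
  let ?D = "dg k c"
  let ?Psi = "\<lambda>P. (\<lambda>j\<in>{..<k}. (\<lambda>i. P (i,j)) ` {..<c j})"
  let ?B = "PiE {..<k} (\<lambda>j. {A. A \<subseteq> {1..n} \<and> card A = c j})"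
  have inj: "inj_on ?Psi (ssytD ?D n)"
  proof (rule inj_onI)
    fix P P' assume P: "P \<in> ssytD ?D n" and P': "P' \<in> ssytD ?D n" and e: "?Psi P = ?Psi P'"
    show "P = P'"
    proof
      fix u :: "nat \<times> nat"
      obtain i j where u: "u = (i,j)" by (cases u)
      show "P u = P' u"
      proof (cases "u \<in> ?D")
        case False thus ?thesis using ssytD_zero[OF P] ssytD_zero[OF P'] by simp
      next
        case True
        hence j: "j < k" and i: "i < c j" using u unfolding dg_def by auto
        have im: "(\<lambda>i. P (i,j)) ` {..<c j} = (\<lambda>i. P' (i,j)) ` {..<c j}"
          using fun_cong[OF e, of j] j by simp
        have "P (i,j) = P' (i,j)"
          by (rule smono_same_image[of "{..<c j}" "\<lambda>i. P (i,j)" "\<lambda>i. P' (i,j)" i])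
             (use col_smono[OF ssytD_col[OF P] j] col_smono[OF ssytD_col[OF P'] j] im i in auto)
        thus ?thesis using u by simp
      qed
    qed
  qed
  have into: "?Psi ` ssytD ?D n \<subseteq> ?B"
  proof
    fix y assume "y \<in> ?Psi ` ssytD ?D n"
    then obtain P where P: "P \<in> ssytD ?D n" and y: "y = ?Psi P" by auto
    show "y \<in> ?B" unfolding y
    proof (rule PiE_I)
      fix j assume j: "j \<in> {..<k}"
      have sub: "(\<lambda>i. P (i,j)) ` {..<c j} \<subseteq> {1..n}"
        using ssytD_range[OF P] j unfolding dg_def by auto
      have "inj_on (\<lambda>i. P (i,j)) {..<c j}" using col_smono[OF ssytD_col[OF P]] j smono_inj by auto
      hence "card ((\<lambda>i. P (i,j)) ` {..<c j}) = c j" by (simp add: card_image)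
      thus "(\<lambda>j\<in>{..<k}. (\<lambda>i. P (i,j)) ` {..<c j}) j \<in> {A. A \<subseteq> {1..n} \<and> card A = c j}"
        using sub j by simp
    qed simp
  qed
  have "card (ssytD ?D n) = card (?Psi ` ssytD ?D n)" by (rule card_image[OF inj, symmetric])
  also have "\<dots> \<le> card ?B" by (rule card_mono[OF _ into]) (simp add: finite_PiE)
  also have "\<dots> = (\<Prod>j<k. n choose c j)" by (simp add: card_PiE n_subsets)
  finally show ?thesis .
qed

lemma sytD_zero: "Q \<in> sytD D N \<Longrightarrow> x \<notin> D \<Longrightarrow> Q x = 0" unfolding sytD_def by blast
lemma sytD_bij: "Q \<in> sytD D N \<Longrightarrow> bij_betw Q D {1..N}" unfolding sytD_def by blast
lemma sytD_col: "Q \<in> sytD D N \<Longrightarrow> \<forall>i j. (Suc i, j) \<in> D \<longrightarrow> Q (i, j) < Q (Suc i, j)"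
  unfolding sytD_def by blast

definition wrd :: "nat \<Rightarrow> (nat \<Rightarrow> nat) \<Rightarrow> nat \<Rightarrow> (nat \<times> nat \<Rightarrow> nat) \<Rightarrow> nat \<Rightarrow> nat" where
  "wrd k c N Q = (\<lambda>m\<in>{1..N}. snd (inv_into (dg k c) Q m))"

lemma wrd_col:
  assumes Q: "Q \<in> sytD (dg k c) N" and j: "j < k"
  shows "(\<lambda>i. Q (i,j)) ` {..<c j} = {m\<in>{1..N}. wrd k c N Q m = j}"
proof -
  have b: "bij_betw Q (dg k c) {1..N}" by (rule sytD_bij[OF Q])
  show ?thesis
  proof (intro equalityI subsetI)
    fix m assume "m \<in> (\<lambda>i. Q (i,j)) ` {..<c j}"
    then obtain i where i: "i < c j" and m: "m = Q (i,j)" by auto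
    have ij: "(i,j) \<in> dg k c" using i j unfolding dg_def by auto
    have "m \<in> {1..N}" using b ij m bij_betwE by blast
    moreover have "inv_into (dg k c) Q m = (i,j)" using b ij m by (simp add: bij_betw_def inv_into_f_f)
    ultimately show "m \<in> {m\<in>{1..N}. wrd k c N Q m = j}" unfolding wrd_def by simp
  next
    fix m assume "m \<in> {m\<in>{1..N}. wrd k c N Q m = j}"
    hence m: "m \<in> {1..N}" and w: "snd (inv_into (dg k c) Q m) = j" unfolding wrd_def by auto
    let ?u = "inv_into (dg k c) Q m"
    have u: "?u \<in> dg k c" using bij_betw_inv_into[OF b] m bij_betwE by blast
    have Qu: "Q ?u = m" using b m by (meson bij_betw_inv_into_right)
    obtain i where ui: "?u = (i,j)" using w by (cases ?u) auto
    have "i < c j" using u ui unfolding dg_def by auto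
    thus "m \<in> (\<lambda>i. Q (i,j)) ` {..<c j}" using Qu ui by force
  qed
qed

lemma wrd_inj: "inj_on (wrd k c N) (sytD (dg k c) N)"
proof (rule inj_onI)
  fix Q Q' assume Q: "Q \<in> sytD (dg k c) N" and Q': "Q' \<in> sytD (dg k c) N" and e: "wrd k c N Q = wrd k c N Q'"
  show "Q = Q'"
  proof
    fix u :: "nat \<times> nat"
    obtain i j where u: "u = (i,j)" by (cases u)
    show "Q u = Q' u"
    proof (cases "u \<in> dg k c")
      case False thus ?thesis using sytD_zero[OF Q] sytD_zero[OF Q'] by simp
    next
      case True
      hence j: "j < k" and i: "i < c j" using u unfolding dg_def by auto
      have im: "(\<lambda>i. Q (i,j)) ` {..<c j} = (\<lambda>i. Q' (i,j)) ` {..<c j}"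
        unfolding wrd_col[OF Q j] wrd_col[OF Q' j] e ..
      have "Q (i,j) = Q' (i,j)"
        by (rule smono_same_image[of "{..<c j}" "\<lambda>i. Q (i,j)" "\<lambda>i. Q' (i,j)" i])
           (use col_smono[OF sytD_col[OF Q] j] col_smono[OF sytD_col[OF Q'] j] im i in auto)
      thus ?thesis using u by simp
    qed
  qed
qed

lemma wrd_weight:
  assumes Q: "Q \<in> sytD (dg k c) N"
  shows "(\<Prod>m\<in>{1..N}. p (wrd k c N Q m)) = (\<Prod>j<k. (p j :: real) ^ c j)"
proof -
  have b: "bij_betw Q (dg k c) {1..N}" by (rule sytD_bij[OF Q])
  have "(\<Prod>m\<in>{1..N}. p (wrd k c N Q m)) = (\<Prod>u\<in>dg k c. p (wrd k c N Q (Q u)))"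
    by (rule prod.reindex_bij_betw[OF b, symmetric])
  also have "\<dots> = (\<Prod>u\<in>dg k c. p (snd u))"
  proof (rule prod.cong[OF refl])
    fix u assume u: "u \<in> dg k c"
    have "Q u \<in> {1..N}" using b u bij_betwE by blast
    moreover have "inv_into (dg k c) Q (Q u) = u" using b u by (simp add: bij_betw_def inv_into_f_f)
    ultimately show "p (wrd k c N Q (Q u)) = p (snd u)" unfolding wrd_def by simp
  qed
  also have "\<dots> = (\<Prod>j<k. p j ^ c j)" by (rule prod_dg)
  finally show ?thesis .
qed

lemma syt_upper:
  assumes p0: "\<And>j. p j \<ge> (0::real)" and p1: "(\<Sum>j<k. p j) = 1"
  shows "real (card (sytD (dg k c) N)) * (\<Prod>j<k. p j ^ c j) \<le> 1"
proof -
  let ?S = "sytD (dg k c) N"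
  let ?W = "PiE {1..N} (\<lambda>_. {..<k})"
  let ?f = "\<lambda>w. \<Prod>m\<in>{1..N}. p (w m)"
  have into: "wrd k c N ` ?S \<subseteq> ?W"
  proof
    fix w assume "w \<in> wrd k c N ` ?S"
    then obtain Q where Q: "Q \<in> ?S" and w: "w = wrd k c N Q" by auto
    have b: "bij_betw Q (dg k c) {1..N}" by (rule sytD_bij[OF Q])
    show "w \<in> ?W" unfolding w wrd_def
    proof (rule PiE_I)
      fix m assume m: "m \<in> {1..N}"
      have "inv_into (dg k c) Q m \<in> dg k c" using bij_betw_inv_into[OF b] m bij_betwE by blast
      thus "(\<lambda>m\<in>{1..N}. snd (inv_into (dg k c) Q m)) m \<in> {..<k}" using m dg_snd by auto
    qed auto
  qed
  have "real (card ?S) * (\<Prod>j<k. p j ^ c j) = (\<Sum>Q\<in>?S. ?f (wrd k c N Q))"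
    using wrd_weight by simp
  also have "\<dots> = (\<Sum>w\<in>wrd k c N ` ?S. ?f w)"
    by (rule sum.reindex[OF wrd_inj, symmetric, unfolded comp_def])
  also have "\<dots> \<le> (\<Sum>w\<in>?W. ?f w)"
    by (rule sum_mono2) (use into p0 in \<open>auto simp: finite_PiE intro!: prod_nonneg\<close>)
  also have "\<dots> = (\<Prod>m\<in>{1..N}. \<Sum>j<k. p j)"
    by (rule prod_sum_PiE[symmetric]) auto
  also have "\<dots> = 1" using p1 by simp
  finally show ?thesis .
qed




lemma pow_succ_le: "real (Suc m) ^ m \<le> exp 1 * real m ^ m"
proof (cases "m = 0")
  case True thus ?thesis by simp
next
  case False
  hence mp: "real m > 0" by simp
  have "1 + 1 / real m \<le> exp (1 / real m)" by (rule exp_ge_add_one_self)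
  hence "(1 + 1 / real m) ^ m \<le> exp (1 / real m) ^ m" by (rule power_mono) (use mp in simp)
  also have "\<dots> = exp (real m * (1 / real m))" by (rule exp_of_nat_mult[symmetric])
  also have "\<dots> = exp 1" using mp by simp
  finally have h: "(1 + 1 / real m) ^ m \<le> exp 1" .
  have eq: "real (Suc m) = real m * (1 + 1 / real m)" using mp by (simp add: field_simps)
  have "real (Suc m) ^ m = (real m * (1 + 1 / real m)) ^ m" by (subst eq) (rule refl)
  also have "\<dots> = real m ^ m * (1 + 1 / real m) ^ m" by (simp add: power_mult_distrib)
  also have "\<dots> \<le> real m ^ m * exp 1" using h by (intro mult_left_mono) auto
  finally show ?thesis by (simp add: mult.commute)
qed

lemma fact_lower: "real m ^ m \<le> fact m * exp (real m)"
proof (induct m)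
  case 0 thus ?case by simp
next
  case (Suc m)
  have "real (Suc m) ^ Suc m = real (Suc m) * real (Suc m) ^ m" by simp
  also have "\<dots> \<le> real (Suc m) * (exp 1 * real m ^ m)" using pow_succ_le by (intro mult_left_mono) auto
  also have "\<dots> \<le> real (Suc m) * (exp 1 * (fact m * exp (real m)))" using Suc by (intro mult_left_mono) auto
  also have "\<dots> = fact (Suc m) * exp (real (Suc m))" by (simp add: exp_add algebra_simps)
  finally show ?case .
qed

lemma e_pow_le:
  assumes m: "1 \<le> m"
  shows "exp 1 * real m ^ Suc m \<le> real (Suc m) ^ Suc m"
proof -
  have mp: "real m > 0" using m by simp
  let ?r = "real (Suc m) / real m"
  have rp: "?r > 0" using mp by simp
  have "ln (real m / real (Suc m)) \<le> real m / real (Suc m) - 1" by (rule ln_le_minus_one) (use mp in simp)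
  also have "\<dots> = - (1 / real (Suc m))" by (simp add: field_simps)
  finally have "ln (real m / real (Suc m)) \<le> - (1 / real (Suc m))" .
  moreover have "ln (real m / real (Suc m)) = - ln ?r" using mp by (simp add: ln_div)
  ultimately have lr: "1 / real (Suc m) \<le> ln ?r" by simp
  have "1 \<le> real (Suc m) * ln ?r" using lr by (simp add: field_simps)
  hence "exp 1 \<le> exp (real (Suc m) * ln ?r)" by simp
  also have "\<dots> = exp (ln ?r) ^ Suc m" by (rule exp_of_nat_mult)
  also have "\<dots> = ?r ^ Suc m" using rp by simp
  finally have "exp 1 \<le> ?r ^ Suc m" .
  hence "exp 1 * real m ^ Suc m \<le> ?r ^ Suc m * real m ^ Suc m" by (intro mult_right_mono) auto
  also have "\<dots> = real (Suc m) ^ Suc m" using mp by (simp add: power_mult_distrib[symmetric])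
  finally show ?thesis .
qed

lemma fact_upper1: "1 \<le> m \<Longrightarrow> fact m * exp (real m) \<le> exp 1 * real m ^ Suc m"
proof (induct m rule: dec_induct)
  case base thus ?case by simp
next
  case (step m)
  have "fact (Suc m) * exp (real (Suc m)) = real (Suc m) * exp 1 * (fact m * exp (real m))"
    by (simp add: exp_add algebra_simps)
  also have "\<dots> \<le> real (Suc m) * exp 1 * (exp 1 * real m ^ Suc m)" using step by (intro mult_left_mono) auto
  also have "\<dots> \<le> real (Suc m) * exp 1 * real (Suc m) ^ Suc m" using e_pow_le[OF step(1)] by (intro mult_left_mono) auto
  also have "\<dots> = exp 1 * real (Suc m) ^ Suc (Suc m)" by simp
  finally show ?case .
qed

lemma fact_upper: "fact m * exp (real m) \<le> exp 1 * real (Suc m) * real m ^ m"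
proof (cases "m = 0")
  case True thus ?thesis by simp
next
  case False
  hence "fact m * exp (real m) \<le> exp 1 * real m ^ Suc m" using fact_upper1 by simp
  also have "\<dots> = exp 1 * real m * real m ^ m" by simp
  also have "\<dots> \<le> exp 1 * real (Suc m) * real m ^ m" by (intro mult_right_mono mult_left_mono) auto
  finally show ?thesis .
qed

lemma fact_add_le: "fact (a + b) \<le> (fact a * real (a + b) ^ b :: real)"
proof (induct b)
  case 0 thus ?case by simp
next
  case (Suc b)
  have "fact (a + Suc b) = real (Suc (a + b)) * fact (a + b)" by simp
  also have "\<dots> \<le> real (Suc (a + b)) * (fact a * real (a + b) ^ b)" using Suc by (intro mult_left_mono) auto
  also have "\<dots> \<le> real (Suc (a + b)) * (fact a * real (a + Suc b) ^ b)"
    by (intro mult_left_mono power_mono) auto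
  also have "\<dots> = fact a * real (a + Suc b) ^ Suc b" by simp
  finally show ?case .
qed

lemma fact_ratio_mono:
  assumes "c \<le> m"
  shows "(fact m * fact (m + j - c) :: real) \<le> fact (m + j) * fact (m - c)"
proof (induct j)
  case 0 thus ?case using assms by simp
next
  case (Suc j)
  have e: "m + Suc j - c = Suc (m + j - c)" using assms by simp
  have "fact m * fact (m + Suc j - c) = real (Suc (m + j - c)) * (fact m * fact (m + j - c))"
    unfolding e by simp
  also have "\<dots> \<le> real (Suc (m + j - c)) * (fact (m + j) * fact (m - c))" using Suc by (intro mult_left_mono) auto
  also have "\<dots> \<le> real (Suc (m + j)) * (fact (m + j) * fact (m - c))" using assms by (intro mult_right_mono) auto
  also have "\<dots> = fact (m + Suc j) * fact (m - c)" by simp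
  finally show ?case .
qed

lemma fact_ge_pow:
  assumes "c \<le> m"
  shows "(fact (m - c) * real (m - c) ^ c :: real) \<le> fact m"
  using assms
proof (induct c)
  case 0 thus ?case by simp
next
  case (Suc c)
  have e: "m - c = Suc (m - Suc c)" using Suc.prems by simp
  have "fact (m - Suc c) * real (m - Suc c) ^ Suc c = (real (m - Suc c) * fact (m - Suc c)) * real (m - Suc c) ^ c"
    by simp
  also have "\<dots> \<le> fact (m - c) * real (m - c) ^ c"
    unfolding e by (intro mult_mono power_mono) auto
  also have "\<dots> \<le> fact m" using Suc by simp
  finally show ?case .
qed

lemma fact_le_pow:
  assumes "n \<le> N"
  shows "(fact N :: real) \<le> fact (N - n) * real N ^ n"
  using assms
proof (induct n)
  case 0 thus ?case by simp
next
  case (Suc n)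
  have e: "N - n = Suc (N - Suc n)" using Suc.prems by simp
  have "fact N \<le> fact (N - n) * real N ^ n" using Suc by simp
  also have "\<dots> = (real (Suc (N - Suc n)) * fact (N - Suc n)) * real N ^ n" unfolding e by simp
  also have "\<dots> \<le> (real N * fact (N - Suc n)) * real N ^ n"
    using Suc.prems by (intro mult_right_mono) auto
  also have "\<dots> = fact (N - Suc n) * real N ^ Suc n" by simp
  finally show ?case .
qed

lemma choose_upper:
  assumes "n \<le> N"
  shows "real (N choose n) * fact n \<le> real N ^ n"
proof -
  have "(fact N :: real) = of_nat (fact n * fact (N - n) * (N choose n))"
    by (simp only: binomial_fact_lemma[OF assms] of_nat_fact)
  hence "fact N = real (N choose n) * fact n * (fact (N - n) :: real)"
    by (simp add: of_nat_mult mult_ac)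
  hence "real (N choose n) * fact n * fact (N - n) \<le> fact (N - n) * real N ^ n"
    using fact_le_pow[OF assms] by simp
  thus ?thesis by (simp add: mult.commute)
qed




lemma filter_len_iff:
  fixes lam :: "nat list"
  assumes "sorted_wrt (\<ge>) lam"
  shows "i < length (filter (\<lambda>x. m \<le> x) lam) \<longleftrightarrow> i < length lam \<and> m \<le> lam ! i"
  using assms
proof (induct lam arbitrary: i)
  case Nil thus ?case by simp
next
  case (Cons a l)
  have sl: "sorted_wrt (\<ge>) l" and ge: "\<forall>x\<in>set l. x \<le> a" using Cons.prems by auto
  show ?case
  proof (cases "m \<le> a")
    case True
    show ?thesis
    proof (cases i)
      case 0 thus ?thesis using True by simp
    next
      case (Suc i') thus ?thesis using True Cons.hyps[OF sl, of i'] by simp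
    qed
  next
    case False
    have "filter (\<lambda>x. m \<le> x) l = []"
    proof -
      { fix x assume "x \<in> set l" hence "x \<le> a" using ge by auto hence "\<not> m \<le> x" using False by linarith }
      thus ?thesis by (auto simp: filter_empty_conv)
    qed
    moreover have "\<not> (i < length (a # l) \<and> m \<le> (a # l) ! i)"
    proof
      assume h: "i < length (a # l) \<and> m \<le> (a # l) ! i"
      show False
      proof (cases i)
        case 0 thus False using h False by simp
      next
        case (Suc i')
        hence "(a # l) ! i \<in> set l" using h by simp
        thus False using h ge False by auto
      qed
    qed
    ultimately show ?thesis using False by simp
  qed
qed

lemma diagram_dg:
  assumes p: "is_partition n lam" and bnd: "\<forall>x\<in>set lam. x \<le> k"
  shows "diagram lam = dg k (\<lambda>j. conj_part lam (Suc j))"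
proof -
  have s: "sorted_wrt (\<ge>) lam" using p unfolding is_partition_def by simp
  show ?thesis
  proof (intro equalityI subsetI)
    fix u assume "u \<in> diagram lam"
    then obtain i j where u: "u = (i,j)" "i < length lam" "j < lam ! i" unfolding diagram_def by auto
    have "lam ! i \<le> k" using bnd u(2) by auto
    thus "u \<in> dg k (\<lambda>j. conj_part lam (Suc j))"
      using u filter_len_iff[OF s, of i "Suc j"] unfolding dg_def conj_part_def by auto
  next
    fix u assume "u \<in> dg k (\<lambda>j. conj_part lam (Suc j))"
    then obtain i j where u: "u = (i,j)" "j < k" "i < conj_part lam (Suc j)" unfolding dg_def by auto
    thus "u \<in> diagram lam"
      using filter_len_iff[OF s, of i "Suc j"] unfolding diagram_def conj_part_def by auto
  qed
qed

lemma filter_sub: "filter (\<lambda>x. Suc (Suc j) \<le> x) lam = filter (\<lambda>x. Suc (Suc j) \<le> x) (filter (\<lambda>x. Suc j \<le> x) lam)"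
  by (induct lam) auto

lemma validc_conj: "validc k (\<lambda>j. conj_part lam (Suc j))"
  unfolding validc_def conj_part_def
proof (intro allI impI)
  fix j
  show "length (filter (\<lambda>x. Suc (Suc j) \<le> x) lam) \<le> length (filter (\<lambda>x. Suc j \<le> x) lam)"
    by (subst filter_sub) (rule length_filter_le)
qed

lemma card_diagram: "card (diagram lam) = sum_list lam"
proof -
  have "diagram lam = Sigma {..<length lam} (\<lambda>i. {..<lam ! i})" unfolding diagram_def by auto
  hence "card (diagram lam) = (\<Sum>i<length lam. lam ! i)" by (simp add: card_SigmaI)
  thus ?thesis by (simp add: sum_list_sum_nth atLeast0LessThan)
qed

lemma ssyt_eq: "ssyt lam t = ssytD (diagram lam) t"
  unfolding ssyt_def ssytD_def ..

lemma syt_eq: "syt lam = sytD (diagram lam) (sum_list lam)"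
  unfolding syt_def sytD_def ..




lemma binom_term_le1:
  assumes "c \<le> n" "0 < n"
  shows "real (n choose c) * ((real c / real n) ^ c * (real (n - c) / real n) ^ (n - c)) \<le> 1"
proof -
  let ?p = "real c / real n"
  have q: "real (n - c) / real n = 1 - ?p" using assms by (simp add: of_nat_diff field_simps)
  have p01: "0 \<le> ?p" "?p \<le> 1" using assms by auto
  have "1 = (?p + (1 - ?p)) ^ n" by simp
  also have "\<dots> = (\<Sum>i\<le>n. real (n choose i) * ?p ^ i * (1 - ?p) ^ (n - i))" by (rule binomial_ring)
  finally have s: "(\<Sum>i\<le>n. real (n choose i) * ?p ^ i * (1 - ?p) ^ (n - i)) = 1" by simp
  have "real (n choose c) * ?p ^ c * (1 - ?p) ^ (n - c) \<le> (\<Sum>i\<le>n. real (n choose i) * ?p ^ i * (1 - ?p) ^ (n - i))"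
    by (rule member_le_sum[of c "{..n}" "\<lambda>i. real (n choose i) * ?p ^ i * (1 - ?p) ^ (n - i)"])
       (use assms p01 in auto)
  thus ?thesis unfolding q s by (simp add: mult.assoc)
qed

lemma binom_lower:
  assumes cn: "c \<le> n" and n: "0 < n"
  shows "1 \<le> real (n choose c) * ((real c / real n) ^ c * (real (n - c) / real n) ^ (n - c)) * (exp 1 ^ 2 * (real n + 1) ^ 2)"
proof -
  let ?C = "real (n choose c)"
  have fn: "(fact n :: real) = ?C * fact c * fact (n - c)"
  proof -
    have "(fact n :: real) = of_nat (fact c * fact (n - c) * (n choose c))"
      by (simp only: binomial_fact_lemma[OF cn] of_nat_fact)
    thus ?thesis by (simp add: of_nat_mult mult_ac)
  qed
  have en: "exp (real n) = exp (real c) * exp (real (n - c))" using cn by (simp add: exp_add[symmetric] of_nat_diff)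
  have b1: "fact c * exp (real c) \<le> exp 1 * (real n + 1) * real c ^ c"
  proof -
    have "fact c * exp (real c) \<le> exp 1 * real (Suc c) * real c ^ c" by (rule fact_upper)
    also have "\<dots> \<le> exp 1 * (real n + 1) * real c ^ c" using cn by (intro mult_right_mono mult_left_mono) auto
    finally show ?thesis .
  qed
  have b2: "fact (n - c) * exp (real (n - c)) \<le> exp 1 * (real n + 1) * real (n - c) ^ (n - c)"
  proof -
    have "fact (n - c) * exp (real (n - c)) \<le> exp 1 * real (Suc (n - c)) * real (n - c) ^ (n - c)" by (rule fact_upper)
    also have "\<dots> \<le> exp 1 * (real n + 1) * real (n - c) ^ (n - c)" using cn by (intro mult_right_mono mult_left_mono) auto
    finally show ?thesis .
  qed
  have "real n ^ n \<le> fact n * exp (real n)" by (rule fact_lower)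
  also have "\<dots> = ?C * ((fact c * exp (real c)) * (fact (n - c) * exp (real (n - c))))"
    unfolding fn en by (simp add: mult_ac)
  also have "\<dots> \<le> ?C * ((exp 1 * (real n + 1) * real c ^ c) * (exp 1 * (real n + 1) * real (n - c) ^ (n - c)))"
    by (intro mult_left_mono mult_mono b1 b2) auto
  also have "\<dots> = ?C * (real c ^ c * real (n - c) ^ (n - c)) * (exp 1 ^ 2 * (real n + 1) ^ 2)"
    by (simp add: power2_eq_square mult_ac)
  finally have main: "real n ^ n \<le> ?C * (real c ^ c * real (n - c) ^ (n - c)) * (exp 1 ^ 2 * (real n + 1) ^ 2)" .
  have nn: "real n ^ n > 0" using n by simp
  have eq: "(real c / real n) ^ c * (real (n - c) / real n) ^ (n - c) = (real c ^ c * real (n - c) ^ (n - c)) / real n ^ n"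
  proof -
    have "real n ^ c * real n ^ (n - c) = real n ^ n" using cn by (simp add: power_add[symmetric])
    thus ?thesis by (simp add: power_divide)
  qed
  show ?thesis unfolding eq using main nn by (simp add: field_simps)
qed

lemma multinom_lower:
  assumes s: "(\<Sum>j<k. c j) = n" and n: "0 < n"
  shows "1 \<le> fact n / (\<Prod>j<k. fact (c j)) * (\<Prod>j<k. (real (c j) / real n) ^ (c j)) * (exp 1 * (real n + 1)) ^ k"
proof -
  have cn: "\<And>j. j < k \<Longrightarrow> c j \<le> n" using s by (metis finite_lessThan lessThan_iff member_le_sum zero_le)
  have en: "exp (real n) = (\<Prod>j<k. exp (real (c j)))" using s by (simp add: exp_sum[symmetric] of_nat_sum[symmetric])
  have pn: "(\<Prod>j<k. real n ^ c j) = real n ^ n"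
  proof -
    have "real n ^ (\<Sum>j<k. c j) = (\<Prod>j<k. real n ^ c j)" by (rule power_sum)
    thus ?thesis using s by simp
  qed
  have b: "(\<Prod>j<k. fact (c j) * exp (real (c j))) \<le> (\<Prod>j<k. exp 1 * (real n + 1) * real (c j) ^ c j)"
  proof (rule prod_mono)
    fix j assume j: "j \<in> {..<k}"
    have "fact (c j) * exp (real (c j)) \<le> exp 1 * real (Suc (c j)) * real (c j) ^ c j" by (rule fact_upper)
    also have "\<dots> \<le> exp 1 * (real n + 1) * real (c j) ^ c j" using cn j by (intro mult_right_mono mult_left_mono) auto
    finally show "0 \<le> fact (c j) * exp (real (c j)) \<and> fact (c j) * exp (real (c j)) \<le> exp 1 * (real n + 1) * real (c j) ^ c j"
      by simp
  qed
  have Fp: "(\<Prod>j<k. fact (c j) :: real) > 0" by (intro prod_pos) auto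
  have "real n ^ n * (\<Prod>j<k. fact (c j)) \<le> fact n * exp (real n) * (\<Prod>j<k. fact (c j))"
    using fact_lower[of n] Fp by (intro mult_right_mono) auto
  also have "\<dots> = fact n * (\<Prod>j<k. fact (c j) * exp (real (c j)))"
    unfolding en by (simp add: prod.distrib mult_ac)
  also have "\<dots> \<le> fact n * (\<Prod>j<k. exp 1 * (real n + 1) * real (c j) ^ c j)"
    by (intro mult_left_mono b) auto
  also have "\<dots> = fact n * ((exp 1 * (real n + 1)) ^ k * (\<Prod>j<k. real (c j) ^ c j))"
    by (simp add: prod.distrib)
  finally have main: "real n ^ n * (\<Prod>j<k. fact (c j)) \<le> fact n * ((exp 1 * (real n + 1)) ^ k * (\<Prod>j<k. real (c j) ^ c j))" .
  have eq: "(\<Prod>j<k. (real (c j) / real n) ^ (c j)) = (\<Prod>j<k. real (c j) ^ c j) / real n ^ n"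
    unfolding pn[symmetric] by (simp add: power_divide prod_dividef)
  have nn: "real n ^ n > 0" using n by simp
  show ?thesis unfolding eq using main nn Fp by (simp add: field_simps)
qed




lemma fact_shift_le:
  assumes "c \<le> n" "j < k"
  shows "(fact (c + (k - 1 - j)) :: real) \<le> fact c * (real n + real k) ^ k"
proof -
  have "(fact (c + (k - 1 - j)) :: real) \<le> fact c * real (c + (k - 1 - j)) ^ (k - 1 - j)" by (rule fact_add_le)
  also have "\<dots> \<le> fact c * (real n + real k) ^ (k - 1 - j)"
    using assms by (intro mult_left_mono power_mono) auto
  also have "\<dots> \<le> fact c * (real n + real k) ^ k"
    using assms by (intro mult_left_mono power_increasing) auto
  finally show ?thesis .
qed

lemma Af_lower_s:
  assumes cn: "\<forall>j<k. c j \<le> n"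
  shows "(\<Prod>j<k. real (n choose c j)) / (real n + real k) ^ (k * k) \<le> Af k c n"
proof -
  have P: "(real n + real k) ^ k > 0" using cn by (cases k) auto
  have "(\<Prod>j<k. real (n choose c j)) / (real n + real k) ^ (k * k) = (\<Prod>j<k. real (n choose c j) / (real n + real k) ^ k)"
    by (simp add: prod_dividef power_mult)
  also have "\<dots> \<le> Af k c n" unfolding Af_def
  proof (rule prod_mono)
    fix j assume j: "j \<in> {..<k}"
    have c: "c j \<le> n" using cn j by auto
    let ?F1 = "fact (c j + (k - 1 - j)) :: real"
    have F1: "?F1 \<le> fact (c j) * (real n + real k) ^ k" using fact_shift_le c j by auto
    have R: "(fact n * fact (n + j - c j) :: real) \<le> fact (n + j) * fact (n - c j)" by (rule fact_ratio_mono[OF c])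
    have C: "real (n choose c j) = fact n / (fact (c j) * fact (n - c j))" by (rule binomial_fact[OF c])
    have pos: "?F1 > 0" "(fact (n + j - c j) :: real) > 0" "(fact (c j) :: real) > 0" "(fact (n - c j) :: real) > 0" by auto
    have "fact n * (?F1 * fact (n + j - c j)) \<le> fact n * (fact (c j) * (real n + real k) ^ k * fact (n + j - c j))"
      using F1 by (intro mult_left_mono mult_right_mono) auto
    also have "\<dots> = (fact n * fact (n + j - c j)) * (fact (c j) * (real n + real k) ^ k)" by (simp add: mult_ac)
    also have "\<dots> \<le> (fact (n + j) * fact (n - c j)) * (fact (c j) * (real n + real k) ^ k)"
      using R P by (intro mult_right_mono) auto
    finally have key: "fact n * (?F1 * fact (n + j - c j)) \<le> fact (n + j) * (fact (c j) * fact (n - c j) * (real n + real k) ^ k)"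
      by (simp add: mult_ac)
    have "real (n choose c j) / (real n + real k) ^ k = fact n / (fact (c j) * fact (n - c j) * (real n + real k) ^ k)"
      unfolding C by simp
    also have "\<dots> \<le> fact (n + j) / (?F1 * fact (n + j - c j))"
      using key pos P by (simp add: divide_simps)
    finally show "0 \<le> real (n choose c j) / (real n + real k) ^ k \<and>
        real (n choose c j) / (real n + real k) ^ k \<le> fact (n + j) / (?F1 * fact (n + j - c j))"
      using P by simp
  qed
  finally show ?thesis .
qed

lemma Af_lower_f:
  assumes cn: "\<forall>j<k. c j \<le> n" and nT: "n \<le> T"
  shows "(\<Prod>j<k. real (T - n) ^ c j / (fact (c j) * (real n + real k) ^ k)) \<le> Af k c T"
  unfolding Af_def
proof (rule prod_mono)
  fix j assume j: "j \<in> {..<k}"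
  have c: "c j \<le> n" using cn j by auto
  let ?F1 = "fact (c j + (k - 1 - j)) :: real"
  have P: "(real n + real k) ^ k > 0" using j by auto
  have F1: "?F1 \<le> fact (c j) * (real n + real k) ^ k" using fact_shift_le c j by auto
  have G: "(fact (T + j - c j) * real (T + j - c j) ^ c j :: real) \<le> fact (T + j)"
    using fact_ge_pow[of "c j" "T + j"] c nT by simp
  have G2: "real (T - n) ^ c j \<le> real (T + j - c j) ^ c j"
    using c nT by (intro power_mono) auto
  have pos: "?F1 > 0" "(fact (T + j - c j) :: real) > 0" "(fact (c j) :: real) > 0" by auto
  have "real (T - n) ^ c j * (?F1 * fact (T + j - c j)) \<le> real (T + j - c j) ^ c j * (fact (c j) * (real n + real k) ^ k * fact (T + j - c j))"
    using G2 F1 by (intro mult_mono) auto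
  also have "\<dots> = (fact (T + j - c j) * real (T + j - c j) ^ c j) * (fact (c j) * (real n + real k) ^ k)" by (simp add: mult_ac)
  also have "\<dots> \<le> fact (T + j) * (fact (c j) * (real n + real k) ^ k)" using G P by (intro mult_right_mono) auto
  finally have key: "real (T - n) ^ c j * (?F1 * fact (T + j - c j)) \<le> fact (T + j) * (fact (c j) * (real n + real k) ^ k)" .
  have "real (T - n) ^ c j / (fact (c j) * (real n + real k) ^ k) \<le> fact (T + j) / (?F1 * fact (T + j - c j))"
    using key pos P by (simp add: divide_simps)
  thus "0 \<le> real (T - n) ^ c j / (fact (c j) * (real n + real k) ^ k) \<and>
      real (T - n) ^ c j / (fact (c j) * (real n + real k) ^ k) \<le> fact (T + j) / (?F1 * fact (T + j - c j))"
    using P by simp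
qed




lemma sum_le_n:
  fixes k :: nat
  assumes "(\<Sum>j<k. c j) = (n::nat)" "j < k" shows "c j \<le> n"
proof -
  have "c j \<le> (\<Sum>i<k. c i)" using assms(2) by (intro member_le_sum) auto
  thus ?thesis using assms(1) by simp
qed

lemma main_upper:
  assumes s: "(\<Sum>j<k. c j) = n" and n: "0 < n"
  shows "real (card (ssytD (dg k c) n)) * real (card (sytD (dg k c) n)) *
     ((\<Prod>j<k. (real (c j) / real n) ^ c j) * (\<Prod>j<k. (real (c j) / real n) ^ c j) *
      (\<Prod>j<k. (real (n - c j) / real n) ^ (n - c j))) \<le> 1"
proof -
  let ?q = "\<Prod>j<k. (real (c j) / real n) ^ c j"
  let ?r = "\<Prod>j<k. (real (n - c j) / real n) ^ (n - c j)"
  let ?S = "real (card (ssytD (dg k c) n))" and ?F = "real (card (sytD (dg k c) n))"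
  have cn: "\<And>j. j < k \<Longrightarrow> c j \<le> n" using sum_le_n[OF s] by blast
  have q0: "?q \<ge> 0" "?r \<ge> 0" by (auto intro!: prod_nonneg)
  have "?S * (?q * ?r) \<le> (\<Prod>j<k. real (n choose c j)) * (?q * ?r)"
    using ssyt_upper[of k c n] q0 by (intro mult_right_mono) (simp_all flip: of_nat_prod)
  also have "\<dots> = (\<Prod>j<k. real (n choose c j) * ((real (c j) / real n) ^ c j * (real (n - c j) / real n) ^ (n - c j)))"
    by (simp add: prod.distrib)
  also have "\<dots> \<le> 1"
    by (rule prod_le_1) (use binom_term_le1 cn n in auto)
  finally have A: "?S * (?q * ?r) \<le> 1" .
  have B: "?F * ?q \<le> 1"
  proof -
    have "(\<Sum>j<k. real (c j) / real n) = 1" using s n by (simp add: sum_divide_distrib[symmetric] flip: of_nat_sum)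
    thus ?thesis using syt_upper[of "\<lambda>j. real (c j) / real n" k c n] by simp
  qed
  have "?S * ?F * (?q * ?q * ?r) = (?S * (?q * ?r)) * (?F * ?q)" by (simp add: mult_ac)
  also have "\<dots> \<le> 1 * 1" using A B q0 by (intro mult_mono) auto
  finally show ?thesis by simp
qed

lemma main_lower:
  assumes s: "(\<Sum>j<k. c j) = n" and n: "0 < n" and v: "validc k c"
  shows "((real n - 1) / (real n + 1)) ^ n \<le> real (card (ssytD (dg k c) n)) * real (card (sytD (dg k c) n)) *
     ((\<Prod>j<k. (real (c j) / real n) ^ c j) * (\<Prod>j<k. (real (c j) / real n) ^ c j) *
      (\<Prod>j<k. (real (n - c j) / real n) ^ (n - c j))) *
     (((exp 1 ^ 2 * (real n + 1) ^ 2) ^ k * (real n + real k) ^ (k * k)) *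
      ((exp 1 * (real n + 1)) ^ k * (real n + real k) ^ (k * k)))"
proof -
  let ?q = "\<Prod>j<k. (real (c j) / real n) ^ c j"
  let ?r = "\<Prod>j<k. (real (n - c j) / real n) ^ (n - c j)"
  let ?S = "real (card (ssytD (dg k c) n))" and ?F = "real (card (sytD (dg k c) n))"
  let ?P1 = "(exp 1 ^ 2 * (real n + 1) ^ 2) ^ k * (real n + real k) ^ (k * k)"
  let ?P2 = "(exp 1 * (real n + 1)) ^ k * (real n + real k) ^ (k * k)"
  let ?K = "(real n + real k) ^ (k * k)"
  have cn: "\<forall>j<k. c j \<le> n" using sum_le_n[OF s] by blast
  have Kp: "?K > 0" using n by simp
  have q0: "?q \<ge> 0" "?r \<ge> 0" by (auto intro!: prod_nonneg)
  have dgn: "card (dg k c) = n" using dg_card s by simp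
  have S1: "(\<Prod>j<k. real (n choose c j)) / ?K \<le> ?S"
    using Af_lower_s[OF cn] s_ge_Af[OF v cn] by linarith
  have S2: "1 \<le> (\<Prod>j<k. real (n choose c j)) * (?q * ?r) * (exp 1 ^ 2 * (real n + 1) ^ 2) ^ k"
  proof -
    have "1 \<le> (\<Prod>j<k. real (n choose c j) * ((real (c j) / real n) ^ c j * (real (n - c j) / real n) ^ (n - c j)) * (exp 1 ^ 2 * (real n + 1) ^ 2))"
      by (rule prod_ge_1) (use binom_lower cn n in auto)
    thus ?thesis by (simp add: prod.distrib)
  qed
  have SA: "1 \<le> ?S * (?q * ?r) * ?P1"
  proof -
    have "1 \<le> (\<Prod>j<k. real (n choose c j)) / ?K * (?q * ?r) * (exp 1 ^ 2 * (real n + 1) ^ 2) ^ k * ?K"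
      using S2 Kp by (simp add: field_simps)
    also have "\<dots> \<le> ?S * (?q * ?r) * (exp 1 ^ 2 * (real n + 1) ^ 2) ^ k * ?K"
      using S1 q0 Kp by (intro mult_right_mono) auto
    finally show ?thesis by (simp add: mult_ac)
  qed
  define T where "T = n * n"
  have nT: "n \<le> T" unfolding T_def using n by simp
  have cle: "card (ssytD (dg k c) T) \<le> card (sytD (dg k c) n) * ((T + n) choose n)"
    using card_ssyt_le[OF v, of T] dgn by simp
  have A1: "(\<Prod>j<k. real (T - n) ^ c j / (fact (c j) * (real n + real k) ^ k)) \<le> ?F * real ((T + n) choose n)"
  proof -
    have "(\<Prod>j<k. real (T - n) ^ c j / (fact (c j) * (real n + real k) ^ k)) \<le> Af k c T" by (rule Af_lower_f[OF cn nT])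
    also have "\<dots> \<le> real (card (ssytD (dg k c) T))"
      by (rule s_ge_Af[OF v]) (use cn nT in auto)
    also have "\<dots> \<le> ?F * real ((T + n) choose n)" using cle by (simp flip: of_nat_mult)
    finally show ?thesis .
  qed
  have A2: "(\<Prod>j<k. real (T - n) ^ c j / (fact (c j) * (real n + real k) ^ k)) = real (T - n) ^ n / ((\<Prod>j<k. fact (c j)) * ?K)"
  proof -
    have "(\<Prod>j<k. real (T - n) ^ c j) = real (T - n) ^ n"
    proof -
      have "real (T - n) ^ (\<Sum>j<k. c j) = (\<Prod>j<k. real (T - n) ^ c j)" by (rule power_sum)
      thus ?thesis using s by simp
    qed
    moreover have "(\<Prod>j<k. (real n + real k) ^ k) = ?K" by (simp add: power_mult)
    ultimately show ?thesis by (simp add: prod_dividef prod.distrib)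
  qed
  have A3: "real ((T + n) choose n) * fact n \<le> real (T + n) ^ n" by (rule choose_upper) simp
  have Fp: "(\<Prod>j<k. fact (c j) :: real) > 0" by (intro prod_pos) auto
  have fnp: "(fact n :: real) > 0" by simp
  have Tn: "real (T - n) = real n * (real n - 1)" "real (T + n) = real n * (real n + 1)"
    unfolding T_def using n by (simp_all add: of_nat_diff algebra_simps)
  have ratio: "(real (T - n) / real (T + n)) = (real n - 1) / (real n + 1)"
    unfolding Tn using n by simp
  have M: "1 \<le> fact n / (\<Prod>j<k. fact (c j)) * ?q * (exp 1 * (real n + 1)) ^ k" by (rule multinom_lower[OF s n])
  have FA: "((real n - 1) / (real n + 1)) ^ n \<le> ?F * ?q * ?P2"
  proof -
    have TNp: "real (T + n) ^ n > 0" using n by simp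
    have "real (T - n) ^ n / ((\<Prod>j<k. fact (c j)) * ?K) * fact n \<le> ?F * real ((T + n) choose n) * fact n"
      using A1 A2 by (intro mult_right_mono) auto
    also have "\<dots> \<le> ?F * real (T + n) ^ n"
      using A3 by (simp add: mult.assoc mult_left_mono)
    finally have X: "real (T - n) ^ n * fact n \<le> ?F * real (T + n) ^ n * ((\<Prod>j<k. fact (c j)) * ?K)"
      using Fp Kp by (simp add: field_simps)
    have "((real n - 1) / (real n + 1)) ^ n = real (T - n) ^ n / real (T + n) ^ n"
      unfolding ratio[symmetric] by (simp add: power_divide)
    also have "\<dots> \<le> real (T - n) ^ n / real (T + n) ^ n * (fact n / (\<Prod>j<k. fact (c j)) * ?q * (exp 1 * (real n + 1)) ^ k)"
    proof -
      have "real (T - n) ^ n / real (T + n) ^ n * 1 \<le> real (T - n) ^ n / real (T + n) ^ n * (fact n / (\<Prod>j<k. fact (c j)) * ?q * (exp 1 * (real n + 1)) ^ k)"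
        using M TNp by (intro mult_left_mono) auto
      thus ?thesis by (simp only: mult_1_right)
    qed
    also have "\<dots> = (real (T - n) ^ n * fact n) / (real (T + n) ^ n * (\<Prod>j<k. fact (c j))) * ?q * (exp 1 * (real n + 1)) ^ k"
      by (simp add: field_simps)
    also have "\<dots> \<le> (?F * real (T + n) ^ n * ((\<Prod>j<k. fact (c j)) * ?K)) / (real (T + n) ^ n * (\<Prod>j<k. fact (c j))) * ?q * (exp 1 * (real n + 1)) ^ k"
      using X TNp Fp q0 by (intro mult_right_mono divide_right_mono) auto
    also have "\<dots> = ?F * ?q * ?P2" using TNp Fp by (simp add: field_simps)
    finally show ?thesis .
  qed
  have r0: "((real n - 1) / (real n + 1)) ^ n \<ge> 0" using n by simp
  have "((real n - 1) / (real n + 1)) ^ n = 1 * ((real n - 1) / (real n + 1)) ^ n" by simp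
  also have "\<dots> \<le> (?S * (?q * ?r) * ?P1) * (?F * ?q * ?P2)"
    using SA FA r0 by (intro mult_mono) auto
  also have "\<dots> = ?S * ?F * (?q * ?q * ?r) * (?P1 * ?P2)" by (simp add: mult_ac)
  finally show ?thesis .
qed




definition psi :: "real \<Rightarrow> real" where "psi x = pow0 x x"

lemma psi_pos: "0 \<le> x \<Longrightarrow> psi x > 0"
  unfolding psi_def pow0_def by auto

lemma psi_pow:
  assumes "c \<le> n" "0 < n"
  shows "(real c / real n) ^ c = psi (real c / real n) ^ n"
proof (cases "c = 0")
  case True thus ?thesis by (simp add: psi_def pow0_def)
next
  case False
  let ?x = "real c / real n"
  have xp: "?x > 0" using False assms by simp
  have "psi ?x ^ n = (?x powr ?x) ^ n" unfolding psi_def pow0_def using xp False by simp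
  also have "\<dots> = ?x powr (real n * ?x)" by (rule powr_power) (use xp False assms in simp)
  also have "real n * ?x = real c" using assms by simp
  also have "?x powr real c = ?x ^ c" using xp by (simp add: powr_realpow)
  finally show ?thesis by simp
qed

lemma psi_sq: "0 \<le> a \<Longrightarrow> pow0 a (2 * a) = psi a ^ 2"
  unfolding psi_def pow0_def by (auto simp: power2_eq_square powr_add[symmetric])

lemma psi_tendsto:
  assumes nn: "\<And>n. 0 \<le> u n" and lim: "u \<longlonglongrightarrow> L"
  shows "(\<lambda>n. psi (u n)) \<longlonglongrightarrow> psi L"
proof -
  have L0: "0 \<le> L" using nn lim by (intro LIMSEQ_le_const[OF lim]) auto
  show ?thesis
  proof (cases "L = 0")
    case False
    hence Lp: "L > 0" using L0 by simp
    have ev: "eventually (\<lambda>n. u n > 0) sequentially" using order_tendstoD(1)[OF lim Lp] .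
    have "(\<lambda>n. u n powr u n) \<longlonglongrightarrow> L powr L" by (rule tendsto_powr[OF lim lim]) (use Lp in simp)
    moreover have "psi L = L powr L" unfolding psi_def pow0_def using Lp by simp
    ultimately show ?thesis
      by (rule_tac Lim_transform_eventually[where f="\<lambda>n. u n powr u n"])
         (use ev in \<open>auto elim!: eventually_mono simp: psi_def pow0_def\<close>)
  next
    case True
    have p0: "psi L = 1" unfolding True psi_def pow0_def by simp
    have r: "((\<lambda>x::real. x powr x) \<longlongrightarrow> 1) (at_right 0)" by real_asymp
    show ?thesis unfolding p0
    proof (rule tendstoI)
      fix e :: real assume e: "e > 0"
      have "eventually (\<lambda>x. dist (x powr x) 1 < e) (at_right (0::real))" using tendstoD[OF r e] .
      hence "\<exists>b>(0::real). \<forall>y>0. y < b \<longrightarrow> dist (y powr y) 1 < e" by (simp add: eventually_at_right_field)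
      then obtain b :: real where b: "b > 0" "\<forall>y>0. y < b \<longrightarrow> dist (y powr y) 1 < e" by blast
      have "eventually (\<lambda>n. u n < b) sequentially" using order_tendstoD(2)[OF lim] b True by simp
      thus "eventually (\<lambda>n. dist (psi (u n)) 1 < e) sequentially"
      proof (rule eventually_mono)
        fix n assume "u n < b"
        thus "dist (psi (u n)) 1 < e"
          using b(2)[rule_format, of "u n"] nn[of n] e unfolding psi_def pow0_def by (cases "u n = 0") auto
      qed
    qed
  qed
qed

lemma powr_root_pow:
  assumes "0 \<le> w" "0 < n" shows "(w ^ n) powr (1 / real n) = w"
proof (cases "w = 0")
  case True thus ?thesis using assms by simp
next
  case False
  hence wp: "w > 0" using assms by simp
  have "(w ^ n) powr (1 / real n) = (w powr real n) powr (1 / real n)" using wp by (simp add: powr_realpow)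
  also have "\<dots> = w powr (real n * (1 / real n))" by (simp add: powr_powr)
  also have "\<dots> = w" using assms(2) wp by simp
  finally show ?thesis .
qed




theorem lemma3p11:
  fixes k :: nat and lam :: "nat \<Rightarrow> nat list" and a :: "nat \<Rightarrow> real"
  assumes "0 < k"
    and "\<And>n. 1 \<le> n \<Longrightarrow> is_partition n (lam n)"
    and "\<And>n. 1 \<le> n \<Longrightarrow> (\<forall>x\<in>set (lam n). x \<le> k)"
    and "\<And>i. 1 \<le> i \<Longrightarrow> i \<le> k \<Longrightarrow>
           (\<lambda>n. real (conj_part (lam n) i) / real n) \<longlonglongrightarrow> a i"
  shows "(\<lambda>n. (real (schur_ones (lam n) n) * real (num_syt (lam n))) powr (1 / real n))
           \<longlonglongrightarrow> (\<Prod>i=1..k. 1 / (pow0 (1 - a i) (1 - a i) * pow0 (a i) (2 * a i)))"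
proof -
  define c where "c n j = conj_part (lam n) (Suc j)" for n j
  define x where "x n j = real (c n j) / real n" for n j
  define D where "D n = (\<Prod>j<k. psi (x n j) ^ 2 * psi (1 - x n j))" for n
  define Y where "Y n = real (schur_ones (lam n) n) * real (num_syt (lam n))" for n
  define P where "P n = ((exp 1 ^ 2 * (real n + 1) ^ 2) ^ k * (real n + real k) ^ (k * k) *
      ((exp 1 * (real n + 1)) ^ k * (real n + real k) ^ (k * k)))" for n :: nat
  define Phi where "Phi = (\<Prod>j<k. 1 / (psi (a (Suc j)) ^ 2 * psi (1 - a (Suc j))))"
  have cfun: "\<And>n. c n = (\<lambda>j. conj_part (lam n) (Suc j))" by (rule ext) (simp add: c_def)
  have basic: "(\<Sum>j<k. c n j) = n \<and> validc k (c n) \<and>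
      Y n = real (card (ssytD (dg k (c n)) n)) * real (card (sytD (dg k (c n)) n))" if n: "1 \<le> n" for n
  proof -
    have p: "is_partition n (lam n)" using assms(2) n .
    have b: "\<forall>x\<in>set (lam n). x \<le> k" using assms(3) n .
    have dgq: "diagram (lam n) = dg k (c n)" unfolding cfun by (rule diagram_dg[OF p b])
    have sl: "sum_list (lam n) = n" using p unfolding is_partition_def by simp
    have "card (dg k (c n)) = n" using card_diagram[where lam="lam n"] dgq sl by simp
    hence s: "(\<Sum>j<k. c n j) = n" using dg_card by simp
    have v: "validc k (c n)" unfolding cfun by (rule validc_conj)
    have "Y n = real (card (ssytD (dg k (c n)) n)) * real (card (sytD (dg k (c n)) n))"
      unfolding Y_def schur_ones_def num_syt_def ssyt_eq syt_eq dgq sl ..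
    thus ?thesis using s v by simp
  qed
  have cle: "c n j \<le> n" if "1 \<le> n" "j < k" for n j
    using sum_le_n[where k=k and c="c n" and n=n and j=j] basic[OF that(1)] that(2) by simp
  have x01: "0 \<le> x n j \<and> x n j \<le> 1" if "j < k" for n j
  proof (cases "n = 0")
    case True thus ?thesis unfolding x_def by simp
  next
    case False thus ?thesis using cle[of n j] that unfolding x_def by (simp add: field_simps)
  qed
  have xlim: "(\<lambda>n. x n j) \<longlonglongrightarrow> a (Suc j)" if "j < k" for j
    using assms(4)[of "Suc j"] that unfolding x_def c_def by simp
  have a01: "0 \<le> a (Suc j) \<and> a (Suc j) \<le> 1" if j: "j < k" for j
  proof
    show "0 \<le> a (Suc j)" by (rule LIMSEQ_le_const[OF xlim[OF j]]) (use x01 j in auto)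
    show "a (Suc j) \<le> 1" by (rule LIMSEQ_le_const2[OF xlim[OF j]]) (use x01 j in auto)
  qed
  have Dpos: "D n > 0" for n
    unfolding D_def by (intro prod_pos mult_pos_pos zero_less_power psi_pos) (use x01 in auto)
  have Phi_eq: "Phi = 1 / (\<Prod>j<k. psi (a (Suc j)) ^ 2 * psi (1 - a (Suc j)))"
    unfolding Phi_def by (simp add: prod_dividef)
  have Dl: "(\<lambda>n. D n) \<longlonglongrightarrow> (\<Prod>j<k. psi (a (Suc j)) ^ 2 * psi (1 - a (Suc j)))"
    unfolding D_def
  proof (intro tendsto_prod tendsto_mult tendsto_power)
    fix j assume j: "j \<in> {..<k}"
    show "(\<lambda>n. psi (x n j)) \<longlonglongrightarrow> psi (a (Suc j))"
      by (rule psi_tendsto) (use x01 j xlim in auto)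
    show "(\<lambda>n. psi (1 - x n j)) \<longlonglongrightarrow> psi (1 - a (Suc j))"
      by (rule psi_tendsto) (use x01 j xlim in \<open>auto intro!: tendsto_diff\<close>)
  qed
  have Lpos: "(\<Prod>j<k. psi (a (Suc j)) ^ 2 * psi (1 - a (Suc j))) > 0"
    by (intro prod_pos mult_pos_pos zero_less_power psi_pos) (use a01 in auto)
  have Dlim: "(\<lambda>n. 1 / D n) \<longlonglongrightarrow> Phi"
    unfolding Phi_eq by (intro tendsto_divide tendsto_const Dl) (use Lpos in linarith)
  have target: "(\<Prod>i=1..k. 1 / (pow0 (1 - a i) (1 - a i) * pow0 (a i) (2 * a i))) = Phi"
  proof -
    have "{1..k} = Suc ` {..<k}" by (auto simp: image_iff) (metis Suc_le_D Suc_le_mono lessThan_iff less_Suc_eq_le)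
    hence "(\<Prod>i=1..k. 1 / (pow0 (1 - a i) (1 - a i) * pow0 (a i) (2 * a i))) =
        (\<Prod>j<k. 1 / (pow0 (1 - a (Suc j)) (1 - a (Suc j)) * pow0 (a (Suc j)) (2 * a (Suc j))))"
      by (simp add: prod.reindex)
    also have "\<dots> = Phi" unfolding Phi_def
      by (intro prod.cong refl) (use a01 in \<open>simp add: psi_sq psi_def[symmetric] mult.commute\<close>)
    finally show ?thesis .
  qed
  have qqr: "(\<Prod>j<k. (real (c n j) / real n) ^ c n j) * (\<Prod>j<k. (real (c n j) / real n) ^ c n j) *
      (\<Prod>j<k. (real (n - c n j) / real n) ^ (n - c n j)) = D n ^ n" if n: "1 \<le> n" for n
  proof -
    have e1: "(real (c n j) / real n) ^ c n j = psi (x n j) ^ n" if j: "j < k" for j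
      unfolding x_def by (rule psi_pow) (use cle[OF n j] n in auto)
    have e2: "(real (n - c n j) / real n) ^ (n - c n j) = psi (1 - x n j) ^ n" if j: "j < k" for j
    proof -
      have "(real (n - c n j) / real n) ^ (n - c n j) = psi (real (n - c n j) / real n) ^ n"
        by (rule psi_pow) (use n in auto)
      moreover have "real (n - c n j) / real n = 1 - x n j"
        unfolding x_def using cle[OF n j] n by (simp add: of_nat_diff field_simps)
      ultimately show ?thesis by simp
    qed
    have "(\<Prod>j<k. (real (c n j) / real n) ^ c n j) * (\<Prod>j<k. (real (c n j) / real n) ^ c n j) *
      (\<Prod>j<k. (real (n - c n j) / real n) ^ (n - c n j)) =
      (\<Prod>j<k. psi (x n j) ^ n) * (\<Prod>j<k. psi (x n j) ^ n) * (\<Prod>j<k. psi (1 - x n j) ^ n)"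
      using e1 e2 by simp
    also have "\<dots> = (\<Prod>j<k. (psi (x n j) ^ 2 * psi (1 - x n j)) ^ n)"
      by (simp add: prod.distrib power_mult_distrib power2_eq_square)
    also have "\<dots> = D n ^ n" unfolding D_def by (simp add: prod_power_distrib)
    finally show ?thesis .
  qed
  have Pp: "P n > 0" for n unfolding P_def by (intro mult_pos_pos zero_less_power) (use assms(1) in auto)
  have Y0: "Y n \<ge> 0" for n unfolding Y_def by simp
  have upper: "Y n powr (1 / real n) \<le> 1 / D n" if n: "1 \<le> n" for n
  proof -
    have "Y n * D n ^ n \<le> 1"
      using main_upper[where k=k and c="c n" and n=n] basic[OF n] qqr[OF n] n by simp
    hence "Y n \<le> (1 / D n) ^ n" using Dpos[of n] by (simp add: field_simps)
    hence "Y n powr (1 / real n) \<le> ((1 / D n) ^ n) powr (1 / real n)"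
      using Y0 by (intro powr_mono2) auto
    also have "\<dots> = 1 / D n" by (rule powr_root_pow) (use Dpos[of n] n in auto)
    finally show ?thesis .
  qed
  have lower: "((real n - 1) / (real n + 1)) * P n powr (- 1 / real n) * (1 / D n) \<le> Y n powr (1 / real n)"
    if n: "2 \<le> n" for n
  proof -
    let ?R = "(real n - 1) / (real n + 1)"
    have n1: "1 \<le> n" using n by simp
    have Rp: "?R > 0" using n by simp
    have "?R ^ n \<le> Y n * D n ^ n * P n"
      using main_lower[where k=k and c="c n" and n=n] basic[OF n1] qqr[OF n1] n unfolding P_def by simp
    hence h: "?R ^ n \<le> Y n * (D n ^ n * P n)" by (simp only: mult.assoc)
    have DP: "D n ^ n * P n > 0" using Dpos[of n] Pp[of n] by simp
    have "?R ^ n / (D n ^ n * P n) \<le> Y n" unfolding pos_divide_le_eq[OF DP] by (rule h)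
    moreover have "(?R / D n) ^ n * (1 / P n) = ?R ^ n / (D n ^ n * P n)"
      by (simp only: power_divide times_divide_times_eq mult_1_right)
    ultimately have le: "(?R / D n) ^ n * (1 / P n) \<le> Y n" by simp
    have "((?R / D n) ^ n * (1 / P n)) powr (1 / real n) = ((?R / D n) ^ n) powr (1 / real n) * (1 / P n) powr (1 / real n)"
      by (intro powr_mult; use Dpos[of n] Pp[of n] Rp in auto)
    also have "((?R / D n) ^ n) powr (1 / real n) = ?R / D n"
      by (rule powr_root_pow) (use Dpos[of n] Rp n in auto)
    also have "(1 / P n) powr (1 / real n) = P n powr (- 1 / real n)"
      using Pp[of n] by (simp add: powr_divide powr_minus_divide)
    finally have eq: "((?R / D n) ^ n * (1 / P n)) powr (1 / real n) = ?R / D n * P n powr (- 1 / real n)" .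
    have "?R / D n * P n powr (- 1 / real n) \<le> Y n powr (1 / real n)"
    proof -
      have Q0: "0 \<le> ?R / D n" using divide_pos_pos[OF Rp Dpos[of n]] by (rule less_imp_le)
      have nn: "0 \<le> (?R / D n) ^ n * (1 / P n)" using Q0 Pp[of n] by simp
      show ?thesis unfolding eq[symmetric] by (rule powr_mono2) (use le nn in auto)
    qed
    thus ?thesis by (simp add: field_simps)
  qed
  have Rlim: "(\<lambda>n. (real n - 1) / (real n + 1)) \<longlonglongrightarrow> 1" by real_asymp
  have Plim: "(\<lambda>n. P n powr (- 1 / real n)) \<longlonglongrightarrow> 1" unfolding P_def by real_asymp
  have Llim: "(\<lambda>n. ((real n - 1) / (real n + 1)) * P n powr (- 1 / real n) * (1 / D n)) \<longlonglongrightarrow> 1 * 1 * Phi"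
    by (intro tendsto_mult Rlim Plim Dlim)
  hence Llim': "(\<lambda>n. ((real n - 1) / (real n + 1)) * P n powr (- 1 / real n) * (1 / D n)) \<longlonglongrightarrow> Phi"
    by (simp only: mult_1_left)
  have "(\<lambda>n. Y n powr (1 / real n)) \<longlonglongrightarrow> Phi"
  proof (rule tendsto_sandwich[OF _ _ Llim' Dlim])
    show "eventually (\<lambda>n. ((real n - 1) / (real n + 1)) * P n powr (- 1 / real n) * (1 / D n) \<le> Y n powr (1 / real n)) sequentially"
      using eventually_ge_at_top[of 2] by eventually_elim (rule lower)
    show "eventually (\<lambda>n. Y n powr (1 / real n) \<le> 1 / D n) sequentially"
      using eventually_ge_at_top[of 1] by eventually_elim (rule upper)
  qed
  thus ?thesis unfolding target[symmetric] Y_def .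
qed


end
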